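(* Fix $p\in(0,1)$. Suppose either (1) $\mathbb P(v\ge x)=L(x)x^{-a}$ for $x\ge0$, with $a>1$ and $L$ slowly varying (i.e. $\lim_{x\to\infty}L(tx)/L(x)=1$ for each $t>0$); or (2) $\mathbb P(v\ge x)=L(x)e^{-\delta x^\beta}$ for $x\ge0$, with $\beta\in(0,1/2)$, $\delta>0$ and $L$ slowly varying. Then $$\lim_{j\to\infty}\left|\frac{\mathbb P(\tilde v\ge j)}{\mathbb P(v\ge j/p)}-1\right|=0 .$$
   Context: Probabilistic model: $(B_n)_{n\ge1}$ is a sequence of i.i.d. Bernoulli random variables with parameter $p$, $v$ is a random variable with values in $\mathbb N$ independent of $(B_n)$, and $\tilde v=\sum_{\ell=1}^v B_\ell$. *)

theory Defs
  imports "HOL-Probability.Probability"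
begin

definition slowly_varying :: "(real \<Rightarrow> real) \<Rightarrow> bool" where
  "slowly_varying L \<longleftrightarrow> (\<forall>t>0. ((\<lambda>x. L (t * x) / L x) \<longlongrightarrow> 1) at_top)"

definition thinned :: "(nat \<Rightarrow> 'a \<Rightarrow> nat) \<Rightarrow> ('a \<Rightarrow> nat) \<Rightarrow> 'a \<Rightarrow> nat" where
  "thinned B v \<omega> = (\<Sum>l\<in>{1..v \<omega>}. B l \<omega>)"

end

theory Submission
  imports Defs "HOL-Analysis.Analysis"
begin

lemma UCT:
  fixes f :: "real \<Rightarrow> real"
  assumes fm: "f \<in> borel_measurable borel"
    and lim: "\<And>s. ((\<lambda>u. f (u + s) - f u) \<longlongrightarrow> 0) at_top"
    and e: "\<epsilon> > 0"
  shows "eventually (\<lambda>u. \<forall>s\<in>{0..1}. \<bar>f (u + s) - f u\<bar> < \<epsilon>) at_top"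
proof (rule ccontr)
  assume "\<not> ?thesis"
  then have "\<forall>N. \<exists>u\<ge>N. \<exists>s\<in>{0..1}. \<bar>f (u+s) - f u\<bar> \<ge> \<epsilon>"
    by (auto simp: eventually_at_top_linorder not_less)
  then have "\<forall>n::nat. \<exists>u s. u \<ge> real n \<and> s \<in> {0..1} \<and> \<bar>f (u+s) - f u\<bar> \<ge> \<epsilon>" by blast
  then obtain U S where US: "\<And>n. U n \<ge> real n" "\<And>n. S n \<in> {0..1}" "\<And>n. \<bar>f (U n + S n) - f (U n)\<bar> \<ge> \<epsilon>"
    by metis
  have U: "filterlim U at_top sequentially"
    by (rule filterlim_at_top_mono[OF filterlim_real_sequentially]) (use US in auto)
  have U2: "filterlim (\<lambda>n. U n + S n) at_top sequentially"
    by (rule filterlim_at_top_mono[OF U]) (use US in auto)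
  have key: "\<exists>m. measure lborel {y\<in>{0..3}. \<exists>n\<ge>m. \<bar>f (W n + y) - f (W n)\<bar> \<ge> \<epsilon>/2} < 1/2"
    if W: "filterlim W at_top sequentially" for W :: "nat \<Rightarrow> real"
  proof -
    define E where "E m = {y\<in>{0..3}. \<exists>n\<ge>m. \<bar>f (W n + y) - f (W n)\<bar> \<ge> \<epsilon>/2}" for m
    have Em: "E m \<in> sets lborel" for m
      unfolding E_def using fm by measurable
    have dec: "decseq E" unfolding decseq_def E_def by (blast intro: order_trans)
    have fin: "emeasure lborel (E m) \<noteq> \<infinity>" for m
    proof -
      have "emeasure lborel (E m) \<le> emeasure lborel {0..3::real}"
        by (rule emeasure_mono) (auto simp: E_def)
      then show ?thesis by (auto simp: top_unique)
    qed
    have empty: "(\<Inter>m. E m) = {}"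
    proof safe
      fix y assume y: "y \<in> (\<Inter>m. E m)"
      have "((\<lambda>n. f (W n + y) - f (W n)) \<longlonglongrightarrow> 0)"
        using filterlim_compose[OF lim[of y] W] by simp
      then have "eventually (\<lambda>n. \<bar>f (W n + y) - f (W n)\<bar> < \<epsilon>/2) sequentially"
        using e by (auto simp: tendsto_iff dist_real_def dest!: spec[of _ "\<epsilon>/2"])
      then obtain m where "\<And>n. n \<ge> m \<Longrightarrow> \<bar>f (W n + y) - f (W n)\<bar> < \<epsilon>/2"
        by (auto simp: eventually_sequentially)
      moreover from y have "y \<in> E m" by auto
      ultimately show "y \<in> {}" by (force simp: E_def)
    qed
    have "(\<lambda>m. measure lborel (E m)) \<longlonglongrightarrow> measure lborel (\<Inter>m. E m)"
      by (rule Lim_measure_decseq) (use Em dec fin in auto)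
    then have "(\<lambda>m. measure lborel (E m)) \<longlonglongrightarrow> 0" by (simp add: empty)
    then have "eventually (\<lambda>m. measure lborel (E m) < 1/2) sequentially"
      by (rule order_tendstoD) simp
    then show ?thesis unfolding E_def by (auto simp: eventually_sequentially)
  qed
  obtain m1 where m1: "measure lborel {y\<in>{0..3}. \<exists>n\<ge>m1. \<bar>f (U n + y) - f (U n)\<bar> \<ge> \<epsilon>/2} < 1/2"
    using key[OF U] by blast
  obtain m2 where m2: "measure lborel {y\<in>{0..3}. \<exists>n\<ge>m2. \<bar>f (U n + S n + y) - f (U n + S n)\<bar> \<ge> \<epsilon>/2} < 1/2"
    using key[OF U2] by blast
  define m where "m = max m1 m2"
  define E where "E = {y\<in>{0..3}. \<exists>n\<ge>m1. \<bar>f (U n + y) - f (U n)\<bar> \<ge> \<epsilon>/2}"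
  define F where "F = {y\<in>{0..3}. \<exists>n\<ge>m2. \<bar>f (U n + S n + y) - f (U n + S n)\<bar> \<ge> \<epsilon>/2}"
  define s where "s = S m"
  define P where "P = (+) (-s) -` F"
  have Em: "E \<in> sets lborel" unfolding E_def using fm by measurable
  have Fm: "F \<in> sets lborel" unfolding F_def using fm by measurable
  have Pm: "P \<in> sets lborel"
  proof -
    have "(+) (-s) -` F \<inter> space borel \<in> sets borel"
    proof (rule measurable_sets)
      show "(+) (-s) \<in> borel \<rightarrow>\<^sub>M borel" by measurable
    qed (use Fm in auto)
    then show ?thesis by (simp add: P_def)
  qed
  have "emeasure lborel P = emeasure (distr lborel borel ((+) (-s))) F"
    using Fm by (subst emeasure_distr) (auto simp: P_def)
  also have "\<dots> = emeasure lborel F" by (simp add: lborel_distr_plus)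
  finally have PF: "emeasure lborel P = emeasure lborel F" .
  have Efin: "emeasure lborel E < \<infinity>"
  proof -
    have "emeasure lborel E \<le> emeasure lborel {0..3::real}"
      by (rule emeasure_mono) (auto simp: E_def)
    then show ?thesis by (simp add: le_less_trans)
  qed
  have Ffin: "emeasure lborel F < \<infinity>"
  proof -
    have "emeasure lborel F \<le> emeasure lborel {0..3::real}"
      by (rule emeasure_mono) (auto simp: F_def)
    then show ?thesis by (simp add: le_less_trans)
  qed
  have sub: "{s..s+2} \<subseteq> E \<union> P"
  proof
    fix y assume y: "y \<in> {s..s+2}"
    have s01: "s \<in> {0..1}" using US(2) by (simp add: s_def)
    show "y \<in> E \<union> P"
    proof (rule ccontr)
      assume "y \<notin> E \<union> P"
      then have nE: "y \<notin> E" and nP: "y - s \<notin> F" by (auto simp: P_def)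
      have y03: "y \<in> {0..3}" "y - s \<in> {0..3}" using y s01 by auto
      have mm: "m1 \<le> m" "m2 \<le> m" by (auto simp: m_def)
      have 1: "\<bar>f (U m + y) - f (U m)\<bar> < \<epsilon>/2"
      proof (rule ccontr)
        assume "\<not> ?thesis"
        then have "y \<in> E" using y03 mm unfolding E_def by (auto simp: not_less)
        with nE show False by simp
      qed
      have 2: "\<bar>f (U m + S m + (y - s)) - f (U m + S m)\<bar> < \<epsilon>/2"
      proof (rule ccontr)
        assume "\<not> ?thesis"
        then have "y - s \<in> F" using y03 mm unfolding F_def by (auto simp: not_less)
        with nP show False by simp
      qed
      have "U m + S m + (y - s) = U m + y" by (simp add: s_def)
      with 2 have 2: "\<bar>f (U m + y) - f (U m + S m)\<bar> < \<epsilon>/2" by simp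
      have "\<bar>f (U m + S m) - f (U m)\<bar> \<le> \<bar>f (U m + y) - f (U m)\<bar> + \<bar>f (U m + y) - f (U m + S m)\<bar>"
        by linarith
      with 1 2 US(3)[of m] show False by linarith
    qed
  qed
  have "emeasure lborel {s..s+2} \<le> emeasure lborel (E \<union> P)"
    by (rule emeasure_mono[OF sub]) (use Em Pm in auto)
  also have "\<dots> \<le> emeasure lborel E + emeasure lborel P"
    by (rule emeasure_subadditive) (use Em Pm in auto)
  also have "\<dots> = ennreal (measure lborel E + measure lborel F)"
    using Efin Ffin PF by (simp add: emeasure_eq_ennreal_measure less_top ennreal_plus)
  finally have h: "emeasure lborel {s..s+2} \<le> ennreal (measure lborel E + measure lborel F)" .
  have "emeasure lborel {s..s+2} = ennreal 2" by simp
  with h have h2: "ennreal 2 \<le> ennreal (measure lborel E + measure lborel F)" by metis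
  have "0 \<le> measure lborel E + measure lborel F" by simp
  with h2 have "2 \<le> measure lborel E + measure lborel F" using ennreal_le_iff by blast
  with m1 m2 show False unfolding E_def F_def by linarith
qed

lemma UC2:
  fixes L :: "real \<Rightarrow> real"
  assumes Lpos: "\<And>x. x > 0 \<Longrightarrow> L x > 0"
    and SV: "\<And>t. t > 0 \<Longrightarrow> ((\<lambda>x. L (t * x) / L x) \<longlongrightarrow> 1) at_top"
    and fm: "(\<lambda>u. ln (L (exp u))) \<in> borel_measurable borel"
    and \<eta>: "\<eta> > 0"
  shows "eventually (\<lambda>x. (\<forall>y. x/2 \<le> y \<and> y \<le> x \<longrightarrow> L y \<le> exp \<eta> * L x) \<and>
                           (\<forall>y. x \<le> y \<and> y \<le> 2*x \<longrightarrow> exp (-\<eta>) * L x \<le> L y)) at_top"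
proof -
  define f where "f u = ln (L (exp u))" for u
  have lim: "((\<lambda>u. f (u + s) - f u) \<longlongrightarrow> 0) at_top" for s
  proof -
    have "((\<lambda>x. ln (L (exp s * x) / L x)) \<longlongrightarrow> ln 1) at_top"
      by (intro tendsto_intros SV) auto
    then have "((\<lambda>u. ln (L (exp s * exp u) / L (exp u))) \<longlongrightarrow> 0) at_top"
      using filterlim_compose exp_at_top by fastforce
    moreover have "ln (L (exp s * exp u) / L (exp u)) = f (u + s) - f u" for u
      using Lpos[of "exp u"] Lpos[of "exp s * exp u"] by (simp add: f_def ln_div exp_add mult.commute)
    ultimately show ?thesis by simp
  qed
  have "eventually (\<lambda>u. \<forall>s\<in>{0..1}. \<bar>f (u + s) - f u\<bar> < \<eta>) at_top"
    by (rule UCT) (use fm lim \<eta> in \<open>auto simp: f_def[abs_def]\<close>)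
  then obtain U0 where U0: "\<forall>u\<ge>U0. \<forall>s\<in>{0..1}. \<bar>f (u + s) - f u\<bar> < \<eta>"
    by (auto simp: eventually_at_top_linorder)
  have fL: "f (ln z) = ln (L z)" if "z > 0" for z using that by (simp add: f_def)
  have l2: "ln 2 < (1::real)" by (rule ln_2_less_1)
  show ?thesis
    unfolding eventually_at_top_linorder
  proof (intro exI[of _ "exp (U0 + 1)"] allI impI conjI)
    fix x assume x: "x \<ge> exp (U0 + 1)"
    have x0: "x > 0" using x by (smt (verit) exp_gt_zero)
    have lx: "ln x \<ge> U0 + 1" using x x0 by (metis exp_le_cancel_iff exp_ln)
    have Lx: "L x > 0" using Lpos x0 by simp
    {
      fix y assume y: "x/2 \<le> y \<and> y \<le> x"
      have y0: "y > 0" using y x0 by simp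
      have a1: "ln y \<le> ln x" using y y0 by simp
      have "ln (x/2) \<le> ln y" using y x0 by simp
      then have a2: "ln x - ln 2 \<le> ln y" using x0 by (simp add: ln_div)
      have "\<bar>f (ln y + (ln x - ln y)) - f (ln y)\<bar> < \<eta>"
        using U0[rule_format, of "ln y" "ln x - ln y"] a1 a2 lx l2 by auto
      then have "\<bar>ln (L x) - ln (L y)\<bar> < \<eta>" using fL[OF x0] fL[OF y0] by simp
      then have "ln (L y) \<le> ln (L x) + \<eta>" by linarith
      then have "exp (ln (L y)) \<le> exp (ln (L x) + \<eta>)" by (simp only: exp_le_cancel_iff)
      then show "L y \<le> exp \<eta> * L x" using Lx Lpos[OF y0] by (simp add: exp_add mult.commute)
    }
    {
      fix y assume y: "x \<le> y \<and> y \<le> 2*x"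
      have y0: "y > 0" using y x0 by simp
      have a1: "ln x \<le> ln y" using y x0 by simp
      have "ln y \<le> ln (2*x)" using y x0 by simp
      then have a2: "ln y \<le> ln x + ln 2" using x0 by (simp add: ln_mult)
      have "\<bar>f (ln x + (ln y - ln x)) - f (ln x)\<bar> < \<eta>"
        using U0[rule_format, of "ln x" "ln y - ln x"] a1 a2 lx l2 by auto
      then have "\<bar>ln (L y) - ln (L x)\<bar> < \<eta>" using fL[OF x0] fL[OF y0] by simp
      then have "ln (L x) - \<eta> \<le> ln (L y)" by linarith
      then have "exp (ln (L x) - \<eta>) \<le> exp (ln (L y))" by (simp only: exp_le_cancel_iff)
      moreover have "exp (ln (L x) - \<eta>) = exp (-\<eta>) * L x"
        using Lx by (simp add: exp_diff exp_minus divide_inverse mult.commute)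
      ultimately show "exp (-\<eta>) * L x \<le> L y" using Lpos[OF y0] by simp
    }
  qed
qed

lemma powr_diff_le:
  fixes a b \<beta> :: real
  assumes a: "0 < a" and ab: "a \<le> b" and \<beta>: "0 \<le> \<beta>" "\<beta> \<le> 1"
  shows "b powr \<beta> - a powr \<beta> \<le> (b - a) * a powr (\<beta> - 1)"
proof -
  define t where "t = b / a"
  have t1: "t \<ge> 1" using a ab by (simp add: t_def)
  have bt: "b = a * t" using a by (simp add: t_def)
  have "t powr \<beta> \<le> t powr 1" by (rule powr_mono) (use \<beta> t1 in auto)
  then have tb: "t powr \<beta> \<le> t" using t1 by simp
  have "b powr \<beta> - a powr \<beta> = a powr \<beta> * (t powr \<beta> - 1)"
    using a t1 by (simp add: bt powr_mult algebra_simps)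
  also have "\<dots> \<le> a powr \<beta> * (t - 1)" using tb by (intro mult_left_mono) auto
  also have "\<dots> = (b - a) * a powr (\<beta> - 1)"
    using a by (simp add: bt powr_diff field_simps)
  finally show ?thesis .
qed

lemma ev_exp_le:
  fixes f :: "'b \<Rightarrow> real" and \<epsilon> :: real
  assumes "eventually (\<lambda>x. f x \<le> ln \<epsilon>) F" "\<epsilon> > 0"
  shows "eventually (\<lambda>x. exp (f x) \<le> \<epsilon>) F"
  using assms(1)
proof eventually_elim
  case (elim x)
  have "exp (f x) \<le> exp (ln \<epsilon>)" using elim by (simp only: exp_le_cancel_iff)
  then show ?case using assms(2) by simp
qed

lemma ev_linear_le:
  fixes c d :: real
  assumes "c > 0"
  shows "eventually (\<lambda>x. - c * x \<le> d) at_top"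
  unfolding eventually_at_top_linorder
proof (intro exI[of _ "- d / c"] allI impI)
  fix x assume x: "x \<ge> - d / c"
  have "c * (- d / c) \<le> c * x" using x assms by (intro mult_left_mono) auto
  then show "- c * x \<le> d" using assms by simp
qed

lemma ev_exp_lin:
  fixes c :: real
  assumes "c > 0" "\<epsilon> > 0"
  shows "eventually (\<lambda>x. exp (- c * x) \<le> \<epsilon>) at_top"
  by (rule ev_exp_le[OF ev_linear_le[OF assms(1)] assms(2)])

lemma slow_growth:
  fixes g :: "real \<Rightarrow> real"
  assumes \<eta>: "\<eta> \<ge> 0" and ev: "eventually (\<lambda>x. \<forall>y. x \<le> y \<and> y \<le> 2*x \<longrightarrow> g y \<ge> g x - \<eta>) at_top"
    and \<kappa>: "\<kappa> > 0"
  shows "eventually (\<lambda>y. g y \<ge> -\<kappa> * y) at_top"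
proof -
  obtain X0 where X0: "\<And>x y. x \<ge> X0 \<Longrightarrow> x \<le> y \<Longrightarrow> y \<le> 2*x \<Longrightarrow> g y \<ge> g x - \<eta>"
    using ev by (auto simp: eventually_at_top_linorder)
  define X where "X = max (max X0 1) (2 * \<eta> / \<kappa>)"
  have X1: "X \<ge> 1" "X \<ge> X0" "X \<ge> 2 * \<eta> / \<kappa>" by (auto simp: X_def)
  have ind: "\<forall>y. X \<le> y \<and> y \<le> 2^k * X \<longrightarrow> g y \<ge> g X - k * \<eta>" for k :: nat
  proof (induction k)
    case 0
    show ?case
    proof (intro allI impI)
      fix y assume "X \<le> y \<and> y \<le> 2^0 * X"
      then have "y = X" by simp
      then show "g y \<ge> g X - real 0 * \<eta>" by simp
    qed
  next
    case (Suc k)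
    show ?case
    proof (intro allI impI)
      fix y assume y: "X \<le> y \<and> y \<le> 2^Suc k * X"
      show "g y \<ge> g X - real (Suc k) * \<eta>"
      proof (cases "y \<le> 2^k * X")
        case True
        then have "g y \<ge> g X - k * \<eta>" using Suc y by auto
        moreover have "real (Suc k) * \<eta> = k * \<eta> + \<eta>" by (simp add: algebra_simps)
        ultimately show ?thesis using \<eta> by linarith
      next
        case False
        define x' where "x' = max X (y/2)"
        have x'1: "x' \<ge> X0" "x' \<le> y" "y \<le> 2 * x'" using X1 y by (auto simp: x'_def)
        have "(1::real) \<le> 2^k" by simp
        then have "X \<le> 2^k * X" using X1 by simp
        moreover have "y / 2 \<le> 2^k * X" using y by simp
        ultimately have x'2: "X \<le> x' \<and> x' \<le> 2^k * X" by (auto simp: x'_def)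
        have "g y \<ge> g x' - \<eta>" using X0 x'1 by auto
        moreover have "g x' \<ge> g X - k * \<eta>" using Suc x'2 by auto
        ultimately show ?thesis by (simp add: algebra_simps)
      qed
    qed
  qed
  have main: "g y \<ge> g X - \<eta> - (\<kappa>/2) * y" if y: "y \<ge> X" for y
  proof -
    define k where "k = nat \<lceil>y / X\<rceil>"
    have yX: "y / X \<ge> 1" using y X1 by simp
    have ck: "0 \<le> \<lceil>y / X\<rceil>" using yX by linarith
    have kreal: "real k = of_int \<lceil>y / X\<rceil>" using ck by (simp add: k_def)
    have kr: "real k \<ge> y / X" using kreal ceiling_correct[of "y/X"] by linarith
    have kr2: "real k \<le> y / X + 1" using kreal ceiling_correct[of "y/X"] by linarith
    have "k < 2 ^ k" by (rule less_exp)
    then have "real k \<le> real (2 ^ k)" by linarith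
    then have k2: "real k \<le> 2 ^ k" by simp
    have "y = (y / X) * X" using X1 by simp
    also have "\<dots> \<le> 2 ^ k * X" using kr k2 X1 by (intro mult_right_mono) linarith+
    finally have "y \<le> 2^k * X" .
    then have "g y \<ge> g X - k * \<eta>" using ind y by auto
    moreover have "k * \<eta> \<le> (y / X + 1) * \<eta>" using kr2 \<eta> by (intro mult_right_mono) auto
    moreover have "(y / X) * \<eta> \<le> (\<kappa>/2) * y"
    proof -
      have "2 * \<eta> / \<kappa> * \<kappa> \<le> X * \<kappa>" using X1(3) \<kappa> by (intro mult_right_mono) auto
      then have a1: "2 * \<eta> \<le> X * \<kappa>" using \<kappa> by simp
      have "\<eta> / X \<le> \<kappa> / 2" using a1 X1(1) by (auto simp: divide_le_eq mult.commute)
      then have "(\<eta> / X) * y \<le> (\<kappa>/2) * y" using y X1 by (intro mult_right_mono) auto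
      moreover have "(y / X) * \<eta> = (\<eta> / X) * y" by simp
      ultimately show ?thesis by linarith
    qed
    moreover have "(y / X + 1) * \<eta> = (y / X) * \<eta> + \<eta>" by (simp add: algebra_simps)
    ultimately show ?thesis by linarith
  qed
  show ?thesis
    unfolding eventually_at_top_linorder
  proof (intro exI[of _ "max X (2 * (\<eta> - g X) / \<kappa>)"] allI impI)
    fix y assume y: "y \<ge> max X (2 * (\<eta> - g X) / \<kappa>)"
    have "(\<kappa>/2) * (2 * (\<eta> - g X) / \<kappa>) \<le> (\<kappa>/2) * y" using y \<kappa> by (intro mult_left_mono) auto
    moreover have "(\<kappa>/2) * (2 * (\<eta> - g X) / \<kappa>) = \<eta> - g X" using \<kappa> by simp
    ultimately have "(\<kappa>/2) * y \<ge> \<eta> - g X" by linarith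
    with main[of y] y show "g y \<ge> -\<kappa> * y" by simp
  qed
qed

lemma final_conv:
  fixes q :: "real \<Rightarrow> real" and T :: "nat \<Rightarrow> real" and p :: real
  assumes p: "p > 0" and qpos: "\<And>x. q x > 0"
    and H: "\<And>\<epsilon>. \<epsilon> > 0 \<Longrightarrow> \<epsilon> \<le> 1 \<Longrightarrow> eventually (\<lambda>x. \<forall>j. real j = p * x \<longrightarrow> T j \<le> (1+\<epsilon>) * q x \<and> (1-\<epsilon>) * q x \<le> T j) at_top"
  shows "(\<lambda>j. \<bar>T j / q (real j / p) - 1\<bar>) \<longlonglongrightarrow> 0"
  unfolding tendsto_iff dist_real_def
proof (intro allI impI)
  fix \<epsilon> :: real assume e: "\<epsilon> > 0"
  have fl: "filterlim (\<lambda>j. real j / p) at_top sequentially"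
  proof -
    have "filterlim (\<lambda>j. (1/p) * real j) at_top sequentially"
      by (rule filterlim_tendsto_pos_mult_at_top[OF tendsto_const]) (use p in \<open>auto intro: filterlim_real_sequentially\<close>)
    then show ?thesis by simp
  qed
  have "eventually (\<lambda>j. \<forall>i. real i = p * (real j / p) \<longrightarrow> T i \<le> (1+\<epsilon>/2) * q (real j / p) \<and> (1-\<epsilon>/2) * q (real j / p) \<le> T i) sequentially"
  proof -
    have "eventually (\<lambda>x. \<forall>i. real i = p * x \<longrightarrow> T i \<le> (1+min (\<epsilon>/2) 1) * q x \<and> (1-min (\<epsilon>/2) 1) * q x \<le> T i) at_top"
      using H[of "min (\<epsilon>/2) 1"] e by simp
    then have "eventually (\<lambda>x. \<forall>i. real i = p * x \<longrightarrow> T i \<le> (1+\<epsilon>/2) * q x \<and> (1-\<epsilon>/2) * q x \<le> T i) at_top"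
    proof eventually_elim
      case (elim x)
      show ?case
      proof (intro allI impI)
        fix i assume "real i = p * x"
        with elim have b: "T i \<le> (1+min (\<epsilon>/2) 1) * q x" "(1-min (\<epsilon>/2) 1) * q x \<le> T i" by auto
        have "(1+min (\<epsilon>/2) 1) * q x \<le> (1+\<epsilon>/2) * q x" using qpos[of x] by (intro mult_right_mono) auto
        moreover have "(1-\<epsilon>/2) * q x \<le> (1-min (\<epsilon>/2) 1) * q x" using qpos[of x] by (intro mult_right_mono) auto
        ultimately show "T i \<le> (1+\<epsilon>/2) * q x \<and> (1-\<epsilon>/2) * q x \<le> T i" using b by linarith
      qed
    qed
    from fl[unfolded filterlim_iff, rule_format, OF this] show ?thesis .
  qed
  then show "eventually (\<lambda>j. \<bar>\<bar>T j / q (real j / p) - 1\<bar> - 0\<bar> < \<epsilon>) sequentially"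
  proof eventually_elim
    case (elim j)
    define Q where "Q = q (real j / p)"
    have Q: "Q > 0" using qpos by (simp add: Q_def)
    have "real j = p * (real j / p)" using p by simp
    then have b: "T j \<le> (1+\<epsilon>/2) * Q" "(1-\<epsilon>/2) * Q \<le> T j" using elim unfolding Q_def by blast+
    have "T j / Q \<le> 1 + \<epsilon>/2" using b Q by (simp add: divide_le_eq)
    moreover have "1 - \<epsilon>/2 \<le> T j / Q" using b Q by (simp add: le_divide_eq)
    ultimately have "\<bar>T j / Q - 1\<bar> \<le> \<epsilon>/2" unfolding abs_le_iff by linarith
    then show ?case using e unfolding Q_def by simp
  qed
qed

lemma powr_small:
  fixes \<gamma> k :: real
  assumes "0 < \<gamma>" "\<gamma> < 1" "k > 0"
  shows "eventually (\<lambda>x. x powr \<gamma> \<le> k * x) at_top"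
proof -
  have "((\<lambda>x::real. x powr (\<gamma> - 1)) \<longlongrightarrow> 0) at_top"
    by (rule tendsto_neg_powr) (use assms in \<open>auto intro: filterlim_ident\<close>)
  then have "eventually (\<lambda>x::real. x powr (\<gamma> - 1) < k) at_top"
    using assms by (intro order_tendstoD) auto
  moreover have "eventually (\<lambda>x::real. x > 0) at_top" by simp
  ultimately show ?thesis
  proof eventually_elim
    case (elim x)
    have "x powr \<gamma> = x powr ((\<gamma> - 1) + 1)" by simp
    also have "\<dots> = x powr (\<gamma> - 1) * x powr 1" by (rule powr_add)
    also have "\<dots> = x powr (\<gamma> - 1) * x" using elim by simp
    also have "\<dots> \<le> k * x" using elim by (intro mult_right_mono) auto
    finally show ?case .
  qed
qed

lemma powr_big:
  fixes \<gamma> Z :: real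
  assumes "0 < \<gamma>"
  shows "eventually (\<lambda>x. Z \<le> x powr \<gamma>) at_top"
proof -
  have "((\<lambda>x::real. x powr (-\<gamma>)) \<longlongrightarrow> 0) at_top"
    by (rule tendsto_neg_powr) (use assms in \<open>auto intro: filterlim_ident\<close>)
  moreover have "eventually (\<lambda>x::real. 0 < x powr (-\<gamma>)) at_top"
    by (rule eventually_mono[OF eventually_gt_at_top[of 0]]) simp
  ultimately have "filterlim (\<lambda>x::real. inverse (x powr (-\<gamma>))) at_top at_top"
    by (rule filterlim_inverse_at_top)
  moreover have "inverse (x powr (-\<gamma>)) = x powr \<gamma>" for x :: real
    by (simp add: powr_minus)
  ultimately have "filterlim (\<lambda>x::real. x powr \<gamma>) at_top at_top" by simp
  then show ?thesis by (simp add: filterlim_at_top)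
qed

lemma geom_bound:
  fixes r :: real
  assumes "0 \<le> r" "r \<le> 1/2"
  shows "(\<Sum>i\<in>{1..K}. r ^ i) \<le> 2 * r"
proof -
  have "(\<Sum>i\<in>{1..K}. r ^ i) \<le> 2 * r - 2 * r ^ (K+1)"
  proof (induction K)
    case 0 then show ?case by simp
  next
    case (Suc K)
    have "(\<Sum>i\<in>{1..Suc K}. r ^ i) = (\<Sum>i\<in>{1..K}. r ^ i) + r ^ (K+1)" by simp
    also have "\<dots> \<le> 2 * r - 2 * r ^ (K+1) + r ^ (K+1)" using Suc by simp
    also have "\<dots> \<le> 2 * r - 2 * r ^ (Suc K + 1)"
    proof -
      have "2 * r ^ (K + 2) = (2 * r) * r ^ (K+1)" by simp
      also have "\<dots> \<le> 1 * r ^ (K+1)" using assms by (intro mult_right_mono) auto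
      finally show ?thesis by simp
    qed
    finally show ?case .
  qed
  moreover have "0 \<le> r ^ (K+1)" using assms by simp
  ultimately show ?thesis by linarith
qed

lemma h_inv:
  fixes x \<theta> \<beta> :: real
  assumes "x > 0"
  shows "\<theta> * x powr (1 - \<beta>) * x powr (\<beta> - 1) = \<theta>"
proof -
  have "x powr (1 - \<beta>) * x powr (\<beta> - 1) = x powr ((1 - \<beta>) + (\<beta> - 1))" by (rule powr_add[symmetric])
  also have "\<dots> = 1" using assms by simp
  finally show ?thesis by (simp add: mult.assoc)
qed

lemma sq_h:
  fixes x \<theta> \<beta> p c :: real
  assumes "x > 0"
  shows "(p * (c * (\<theta> * x powr (1 - \<beta>))))\<^sup>2 / x = p\<^sup>2 * c\<^sup>2 * \<theta>\<^sup>2 * x powr (1 - 2 * \<beta>)"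
proof -
  have "(x powr (1 - \<beta>))\<^sup>2 = x powr (1 - \<beta>) * x powr (1 - \<beta>)"
    by (simp add: power2_eq_square)
  also have "\<dots> = x powr ((1 - \<beta>) + (1 - \<beta>))" by (rule powr_add[symmetric])
  finally have "(x powr (1 - \<beta>))\<^sup>2 = x powr ((1 - \<beta>) + (1 - \<beta>))" .
  then have "(x powr (1 - \<beta>))\<^sup>2 / x = x powr ((1 - \<beta>) + (1 - \<beta>)) / x powr 1" using assms by simp
  also have "\<dots> = x powr ((1 - \<beta>) + (1 - \<beta>) - 1)" by (rule powr_diff[symmetric])
  also have "(1 - \<beta>) + (1 - \<beta>) - 1 = 1 - 2 * \<beta>" by simp
  finally have e: "(x powr (1 - \<beta>))\<^sup>2 / x = x powr (1 - 2 * \<beta>)" .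
  have "(p * (c * (\<theta> * x powr (1 - \<beta>))))\<^sup>2 / x = p\<^sup>2 * c\<^sup>2 * \<theta>\<^sup>2 * ((x powr (1 - \<beta>))\<^sup>2 / x)"
    by (simp add: power_mult_distrib)
  then show ?thesis using e by simp
qed

lemma case1:
  fixes q :: "real \<Rightarrow> real" and T :: "nat \<Rightarrow> real" and L :: "real \<Rightarrow> real" and a p :: real
  assumes p: "0 < p" "p < 1"
    and q0: "\<And>x. 0 \<le> q x" and qmono: "\<And>x y. x \<le> y \<Longrightarrow> q y \<le> q x"
    and UB: "\<And>j x h (K::nat). 0 < x \<Longrightarrow> 0 < h \<Longrightarrow> real j = p * x \<Longrightarrow> real (K+1) * h \<le> x \<Longrightarrow>
       T j \<le> q (x - h) + (\<Sum>i\<in>{1..K}. q (x - real (i+1) * h) * exp (-2 * (p * (real i * h))\<^sup>2 / x))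
              + exp (-2 * (p * (real (K+1) * h))\<^sup>2 / x)"
    and LB: "\<And>j x w. 0 < x \<Longrightarrow> 0 < w \<Longrightarrow> real j = p * x \<Longrightarrow>
       q (x + w) * (1 - exp (-2 * (p * w)\<^sup>2 / (x + w + 1))) \<le> T j"
    and a: "a > 1" and SV: "\<And>t. t > 0 \<Longrightarrow> ((\<lambda>x. L (t * x) / L x) \<longlongrightarrow> 1) at_top"
    and qL: "\<And>x. x > 0 \<Longrightarrow> q x = L x * x powr (-a)"
  shows "(\<lambda>j. \<bar>T j / q (real j / p) - 1\<bar>) \<longlonglongrightarrow> 0"
proof -
  have Lpos: "L x > 0" if x: "x > 0" for x
  proof (rule ccontr)
    assume "\<not> L x > 0"
    then have "q x \<le> 0" using qL[OF x] by (simp add: mult_nonpos_nonneg)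
    then have qz: "q y = 0" if "y \<ge> x" for y using qmono[OF that] q0[of y] by linarith
    have "eventually (\<lambda>y. L (2 * y) / L y = 0) at_top"
      unfolding eventually_at_top_linorder
    proof (intro exI[of _ x] allI impI)
      fix y assume y: "y \<ge> x"
      have "L y * y powr (-a) = 0" using qz[OF y] qL[of y] x y by simp
      then have "L y = 0" using x y by simp
      then show "L (2 * y) / L y = 0" by simp
    qed
    then have "((\<lambda>y. L (2 * y) / L y) \<longlongrightarrow> 0) at_top" by (rule tendsto_eventually)
    from tendsto_unique[OF _ this SV[of 2]] show False by simp
  qed
  have qpos1: "q x > 0" if "x > 0" for x using Lpos[OF that] qL[OF that] that by simp
  have qpos: "q x > 0" for x
  proof (cases "x > 0")
    case True then show ?thesis by (rule qpos1)
  next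
    case False then have "q 1 \<le> q x" by (intro qmono) auto
    then show ?thesis using qpos1[of 1] by simp
  qed
  have ratio: "((\<lambda>x. q (c * x) / q x) \<longlongrightarrow> c powr (-a)) at_top" if c: "c > 0" for c
  proof -
    have "((\<lambda>x. L (c * x) / L x * c powr (-a)) \<longlongrightarrow> 1 * c powr (-a)) at_top"
      by (intro tendsto_intros SV c)
    moreover have "eventually (\<lambda>x. L (c * x) / L x * c powr (-a) = q (c * x) / q x) at_top"
      unfolding eventually_at_top_linorder
    proof (intro exI[of _ 1] allI impI)
      fix x :: real assume x: "x \<ge> 1"
      have "q (c * x) / q x = (L (c * x) * (c * x) powr (-a)) / (L x * x powr (-a))"
        using x c by (simp add: qL)
      also have "\<dots> = L (c * x) / L x * c powr (-a)"
        using x c by (simp add: powr_mult)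
      finally show "L (c * x) / L x * c powr (-a) = q (c * x) / q x" by simp
    qed
    ultimately show ?thesis by (simp add: tendsto_cong)
  qed
  have expq: "eventually (\<lambda>x. exp (- c * x) \<le> e * q x) at_top" if c: "c > 0" and e: "e > 0" for c e
  proof -
    define r where "r = 2 powr (-a) / 2"
    have "1 \<le> (2::real) powr a" using a by (intro ge_one_powr_ge_zero) auto
    then have r: "0 < r" "r < 1" by (auto simp: r_def powr_minus field_simps)
    have "eventually (\<lambda>x. q (2 * x) / q x > r) at_top"
      using ratio[of 2] by (rule order_tendstoD) (auto simp: r_def)
    then have "eventually (\<lambda>x. \<forall>y. x \<le> y \<and> y \<le> 2*x \<longrightarrow> ln (q y) \<ge> ln (q x) - (- ln r)) at_top"
    proof eventually_elim
      case (elim x)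
      show ?case
      proof (intro allI impI)
        fix y assume y: "x \<le> y \<and> y \<le> 2*x"
        have "q y \<ge> q (2 * x)" using y by (intro qmono) auto
        moreover have "q (2 * x) > r * q x" using elim qpos[of x] by (simp add: field_simps)
        ultimately have "q y \<ge> r * q x" by simp
        then have "ln (q y) \<ge> ln (r * q x)" using r qpos[of x] by (intro ln_mono) auto
        then show "ln (q y) \<ge> ln (q x) - (- ln r)" using r qpos[of x] by (simp add: ln_mult)
      qed
    qed
    from slow_growth[OF _ this, of "c/2"] r c
    have ev1: "eventually (\<lambda>y. ln (q y) \<ge> -(c/2) * y) at_top" by simp
    have ev2: "eventually (\<lambda>x. exp (-(c/2) * x) \<le> e) at_top" using c e by (intro ev_exp_lin) auto
    from ev1 ev2 show ?thesis
    proof eventually_elim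
      case (elim x)
      have "exp (-(c/2) * x) \<le> exp (ln (q x))" using elim(1) by simp
      then have E: "exp (-(c/2) * x) \<le> q x" using qpos[of x] by simp
      have "exp (-(c/2) * x) * exp (-(c/2) * x) \<le> e * q x"
        by (rule mult_mono) (use elim(2) E e in auto)
      moreover have "exp (- c * x) = exp (-(c/2) * x) * exp (-(c/2) * x)" by (simp flip: exp_add)
      ultimately have "exp (- c * x) \<le> e * q x" by simp
      then show ?case .
    qed
  qed
  show ?thesis
  proof (rule final_conv[OF p(1) qpos])
    fix \<epsilon> :: real assume e: "\<epsilon> > 0" "\<epsilon> \<le> 1"
    have l1: "((\<lambda>t. (1 - t) powr (-a)) \<longlongrightarrow> (1 - 0) powr (-a)) (at_right 0)"
      by (intro tendsto_intros) auto
    have l2: "((\<lambda>t. (1 + t) powr (-a)) \<longlongrightarrow> (1 + 0) powr (-a)) (at_right 0)"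
      by (intro tendsto_intros) auto
    have "eventually (\<lambda>t. (1 - t) powr (-a) < 1 + \<epsilon>/2) (at_right 0)"
      using l1 by (rule order_tendstoD) (use e in simp)
    moreover have "eventually (\<lambda>t. (1 + t) powr (-a) > 1 - \<epsilon>/2) (at_right 0)"
      using l2 by (rule order_tendstoD) (use e in simp)
    ultimately have "eventually (\<lambda>t. (1 - t) powr (-a) < 1 + \<epsilon>/2 \<and> (1 + t) powr (-a) > 1 - \<epsilon>/2) (at_right (0::real))"
      by (rule eventually_conj)
    then obtain b where b: "b > 0" "\<And>t. t > 0 \<Longrightarrow> t < b \<Longrightarrow> (1 - t) powr (-a) < 1 + \<epsilon>/2 \<and> (1 + t) powr (-a) > 1 - \<epsilon>/2"
      unfolding eventually_at_right_field by auto
    define \<theta> where "\<theta> = min (b/2) (1/2)"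
    have th: "\<theta> > 0" "\<theta> \<le> 1/2" using b by (auto simp: \<theta>_def)
    have thb: "(1 - \<theta>) powr (-a) < 1 + \<epsilon>/2" "(1 + \<theta>) powr (-a) > 1 - \<epsilon>/2"
      using b(2)[of \<theta>] th b by (auto simp: \<theta>_def)
    have E1: "eventually (\<lambda>x. q ((1 - \<theta>) * x) / q x < 1 + \<epsilon>/2) at_top"
      using ratio[of "1 - \<theta>"] th thb by (intro order_tendstoD) auto
    have E2: "eventually (\<lambda>x. q ((1 + \<theta>) * x) / q x > 1 - \<epsilon>/2) at_top"
      using ratio[of "1 + \<theta>"] th thb by (intro order_tendstoD) auto
    have E3: "eventually (\<lambda>x. exp (- (2 * p\<^sup>2 * \<theta>\<^sup>2) * x) \<le> \<epsilon>/2 * q x) at_top"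
      using p th e by (intro expq) auto
    have E4: "eventually (\<lambda>x. exp (- (2 * p\<^sup>2 * \<theta>\<^sup>2 / 3) * x) \<le> \<epsilon>/2) at_top"
      using p th e by (intro ev_exp_lin) auto
    have E5: "eventually (\<lambda>x. x \<ge> (1::real)) at_top" by simp
    from E1 E2 E3 E4 E5
    show "eventually (\<lambda>x. \<forall>j. real j = p * x \<longrightarrow> T j \<le> (1+\<epsilon>) * q x \<and> (1-\<epsilon>) * q x \<le> T j) at_top"
    proof eventually_elim
      case (elim x)
      have x: "x > 0" using elim by simp
      have qx: "q x > 0" by (rule qpos)
      show ?case
      proof (intro allI impI conjI)
        fix j assume j: "real j = p * x"
        have "T j \<le> q (x - \<theta> * x) + (\<Sum>i\<in>{1..0::nat}. q (x - real (i+1) * (\<theta> * x)) * exp (-2 * (p * (real i * (\<theta> * x)))\<^sup>2 / x))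
              + exp (-2 * (p * (real (0+1::nat) * (\<theta> * x)))\<^sup>2 / x)"
          by (rule UB) (use x th j in auto)
        also have "(\<Sum>i\<in>{1..0::nat}. q (x - real (i+1) * (\<theta> * x)) * exp (-2 * (p * (real i * (\<theta> * x)))\<^sup>2 / x)) = 0"
          by simp
        also have "-2 * (p * (real (0+1::nat) * (\<theta> * x)))\<^sup>2 / x = - (2 * p\<^sup>2 * \<theta>\<^sup>2) * x"
          using x by (simp add: power2_eq_square field_simps)
        also have "x - \<theta> * x = (1 - \<theta>) * x" by (simp add: algebra_simps)
        finally have U: "T j \<le> q ((1 - \<theta>) * x) + exp (- (2 * p\<^sup>2 * \<theta>\<^sup>2) * x)" by simp
        have "q ((1 - \<theta>) * x) \<le> (1 + \<epsilon>/2) * q x" using elim(1) qx by (simp add: divide_less_eq)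
        then show "T j \<le> (1+\<epsilon>) * q x" using U elim(3) by (simp add: algebra_simps)
      next
        fix j assume j: "real j = p * x"
        have w: "\<theta> * x > 0" using th x by simp
        have L1: "q (x + \<theta> * x) * (1 - exp (-2 * (p * (\<theta> * x))\<^sup>2 / (x + \<theta> * x + 1))) \<le> T j"
          by (rule LB[OF x w j])
        have "-2 * (p * (\<theta> * x))\<^sup>2 / (x + \<theta> * x + 1) \<le> -2 * (p * (\<theta> * x))\<^sup>2 / (3 * x)"
        proof -
          have "\<theta> * x \<le> 1 * x" using th elim(5) by (intro mult_right_mono) auto
          then have "x + \<theta> * x + 1 \<le> 3 * x" using elim(5) by linarith
          moreover have "0 \<le> \<theta> * x" using th x by simp
          then have "0 < x + \<theta> * x + 1" using x by linarith
          ultimately have "(p * (\<theta> * x))\<^sup>2 / (3 * x) \<le> (p * (\<theta> * x))\<^sup>2 / (x + \<theta> * x + 1)"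
            by (intro divide_left_mono) auto
          then show ?thesis by simp
        qed
        also have "-2 * (p * (\<theta> * x))\<^sup>2 / (3 * x) = - (2 * p\<^sup>2 * \<theta>\<^sup>2 / 3) * x"
          using x by (simp add: power2_eq_square field_simps)
        finally have "exp (-2 * (p * (\<theta> * x))\<^sup>2 / (x + \<theta> * x + 1)) \<le> \<epsilon>/2"
          using elim(4) by (meson exp_le_cancel_iff order_trans)
        then have f1: "1 - exp (-2 * (p * (\<theta> * x))\<^sup>2 / (x + \<theta> * x + 1)) \<ge> 1 - \<epsilon>/2" by simp
        have f2: "q (x + \<theta> * x) \<ge> (1 - \<epsilon>/2) * q x"
          using elim(2) qx by (simp add: less_divide_eq algebra_simps)
        have "(1 - \<epsilon>/2) * q x * (1 - \<epsilon>/2) \<le> q (x + \<theta> * x) * (1 - exp (-2 * (p * (\<theta> * x))\<^sup>2 / (x + \<theta> * x + 1)))"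
          using f1 f2 e qx q0[of "x + \<theta> * x"] by (intro mult_mono) auto
        moreover have "(1 - \<epsilon>) * q x \<le> (1 - \<epsilon>/2) * q x * (1 - \<epsilon>/2)"
        proof -
          have "(1 - \<epsilon>) \<le> (1 - \<epsilon>/2) * (1 - \<epsilon>/2)" by (simp add: algebra_simps power2_eq_square)
          then show ?thesis using qx by (simp add: mult_right_mono mult.commute mult.left_commute)
        qed
        ultimately show "(1-\<epsilon>) * q x \<le> T j" using L1 by linarith
      qed
    qed
  qed
qed

lemma case2:
  fixes q :: "real \<Rightarrow> real" and T :: "nat \<Rightarrow> real" and L :: "real \<Rightarrow> real" and p \<beta> \<delta> :: real
  assumes p: "0 < p" "p < 1"
    and q0: "\<And>x. 0 \<le> q x" and qmono: "\<And>x y. x \<le> y \<Longrightarrow> q y \<le> q x"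
    and UB: "\<And>j x h (K::nat). 0 < x \<Longrightarrow> 0 < h \<Longrightarrow> real j = p * x \<Longrightarrow> real (K+1) * h \<le> x \<Longrightarrow>
       T j \<le> q (x - h) + (\<Sum>i\<in>{1..K}. q (x - real (i+1) * h) * exp (-2 * (p * (real i * h))\<^sup>2 / x))
              + exp (-2 * (p * (real (K+1) * h))\<^sup>2 / x)"
    and LB: "\<And>j x w. 0 < x \<Longrightarrow> 0 < w \<Longrightarrow> real j = p * x \<Longrightarrow>
       q (x + w) * (1 - exp (-2 * (p * w)\<^sup>2 / (x + w + 1))) \<le> T j"
    and \<beta>: "0 < \<beta>" "\<beta> < 1/2" and \<delta>: "\<delta> > 0"
    and SV: "\<And>t. t > 0 \<Longrightarrow> ((\<lambda>x. L (t * x) / L x) \<longlongrightarrow> 1) at_top"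
    and qL: "\<And>x. x \<ge> 0 \<Longrightarrow> q x = L x * exp (- \<delta> * x powr \<beta>)"
  shows "(\<lambda>j. \<bar>T j / q (real j / p) - 1\<bar>) \<longlonglongrightarrow> 0"
proof -
  have Lpos: "L x > 0" if x: "x \<ge> 0" for x
  proof (rule ccontr)
    assume "\<not> L x > 0"
    then have "q x \<le> 0" using qL[OF x] by (simp add: mult_nonpos_nonneg)
    then have qz: "q y = 0" if "y \<ge> x" for y using qmono[OF that] q0[of y] by linarith
    have "eventually (\<lambda>y. L (2 * y) / L y = 0) at_top"
      unfolding eventually_at_top_linorder
    proof (intro exI[of _ x] allI impI)
      fix y assume y: "y \<ge> x"
      have "L y * exp (- \<delta> * y powr \<beta>) = 0" using qz[OF y] qL[of y] x y by simp
      then have "L y = 0" by simp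
      then show "L (2 * y) / L y = 0" by simp
    qed
    then have "((\<lambda>y. L (2 * y) / L y) \<longlongrightarrow> 0) at_top" by (rule tendsto_eventually)
    from tendsto_unique[OF _ this SV[of 2]] show False by simp
  qed
  have qpos0: "q x > 0" if "x \<ge> 0" for x using Lpos[OF that] qL[OF that] by simp
  have qpos: "q x > 0" for x
  proof (cases "x \<ge> 0")
    case True then show ?thesis by (rule qpos0)
  next
    case False then have "q 0 \<le> q x" by (intro qmono) auto
    then show ?thesis using qpos0[of 0] by simp
  qed
  have qm: "q \<in> borel_measurable borel"
  proof -
    have "mono (\<lambda>x. - q x)" unfolding mono_def using qmono by fastforce
    then have "(\<lambda>x. - q x) \<in> borel_measurable borel" by (rule borel_measurable_mono)
    then have "(\<lambda>x. - (- q x)) \<in> borel_measurable borel" by measurable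
    then show ?thesis by simp
  qed
  have fm: "(\<lambda>u. ln (L (exp u))) \<in> borel_measurable borel"
  proof -
    have "(\<lambda>u. ln (q (exp u)) + \<delta> * exp u powr \<beta>) \<in> borel_measurable borel"
      using qm by measurable
    moreover have "ln (q (exp u)) + \<delta> * exp u powr \<beta> = ln (L (exp u))" for u
    proof -
      have "q (exp u) = L (exp u) * exp (- \<delta> * exp u powr \<beta>)" by (rule qL) simp
      then have "ln (q (exp u)) = ln (L (exp u)) + (- \<delta> * exp u powr \<beta>)"
        using Lpos[of "exp u"] by (simp add: ln_mult)
      then show ?thesis by simp
    qed
    ultimately show ?thesis by simp
  qed
  have UC: "eventually (\<lambda>x. (\<forall>y. x/2 \<le> y \<and> y \<le> x \<longrightarrow> L y \<le> exp \<eta> * L x) \<and>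
                           (\<forall>y. x \<le> y \<and> y \<le> 2*x \<longrightarrow> exp (-\<eta>) * L x \<le> L y)) at_top"
    if "\<eta> > 0" for \<eta>
    by (rule UC2) (use Lpos SV fm that in auto)
  have expq: "eventually (\<lambda>x. exp (- c * x) \<le> e * q x) at_top" if c: "c > 0" and e: "e > 0" for c e
  proof -
    have "eventually (\<lambda>x. \<forall>y. x \<le> y \<and> y \<le> 2*x \<longrightarrow> ln (L y) \<ge> ln (L x) - 1) at_top"
      using UC[OF zero_less_one]
    proof eventually_elim
      case (elim x)
      show ?case
      proof (intro allI impI)
        fix y assume y: "x \<le> y \<and> y \<le> 2*x"
        show "ln (L y) \<ge> ln (L x) - 1"
        proof (cases "x > 0")
          case True
          have Lx: "L x > 0" "L y > 0" using Lpos True y by auto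
          have "exp (-1) * L x \<le> L y" using elim y by auto
          then have "ln (exp (-1) * L x) \<le> ln (L y)" using Lx by (intro ln_mono) auto
          then show ?thesis using Lx by (simp add: ln_mult)
        next
          case False
          then have "y = x" using y by linarith
          then show ?thesis by simp
        qed
      qed
    qed
    from slow_growth[OF _ this, of "c/4"] c
    have ev1: "eventually (\<lambda>y. ln (L y) \<ge> -(c/4) * y) at_top" by simp
    have ev2: "eventually (\<lambda>x. x powr \<beta> \<le> (c / (4 * \<delta>)) * x) at_top"
      using \<beta> \<delta> c by (intro powr_small) auto
    have ev3: "eventually (\<lambda>x. exp (-(c/2) * x) \<le> e) at_top" using c e by (intro ev_exp_lin) auto
    have ev4: "eventually (\<lambda>x::real. x \<ge> 0) at_top" by simp
    from ev1 ev2 ev3 ev4 show ?thesis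
    proof eventually_elim
      case (elim x)
      have Lx: "L x > 0" using Lpos elim by auto
      have "exp (-(c/4) * x) \<le> exp (ln (L x))" using elim(1) by simp
      then have a1: "exp (-(c/4) * x) \<le> L x" using Lx by simp
      have "\<delta> * x powr \<beta> \<le> \<delta> * ((c / (4 * \<delta>)) * x)" using elim(2) \<delta> by (intro mult_left_mono) auto
      also have "\<dots> = (c/4) * x" using \<delta> by simp
      finally have a2: "exp (-(c/4) * x) \<le> exp (- \<delta> * x powr \<beta>)" by simp
      have "exp (-(c/4) * x) * exp (-(c/4) * x) \<le> L x * exp (- \<delta> * x powr \<beta>)"
        by (rule mult_mono) (use a1 a2 Lx in auto)
      then have a3: "exp (-(c/2) * x) \<le> q x" using qL[of x] elim(4) by (simp flip: exp_add)
      have "exp (-(c/2) * x) * exp (-(c/2) * x) \<le> e * q x"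
        by (rule mult_mono) (use elim(3) a3 e in auto)
      then show ?case by (simp flip: exp_add)
    qed
  qed
  have Qup: "q (x - k) \<le> exp \<eta> * exp (2 * \<delta> * k * x powr (\<beta> - 1)) * q x"
    if x: "x > 0" and k: "0 \<le> k" "k \<le> x/2" and U: "\<forall>y. x/2 \<le> y \<and> y \<le> x \<longrightarrow> L y \<le> exp \<eta> * L x" for x k \<eta>
  proof -
    have xk: "x - k > 0" "x/2 \<le> x - k" using x k by auto
    have L1: "L (x - k) \<le> exp \<eta> * L x" using U xk k by auto
    have D1: "x powr \<beta> - (x - k) powr \<beta> \<le> (x - (x - k)) * (x - k) powr (\<beta> - 1)"
      by (rule powr_diff_le) (use xk k \<beta> in auto)
    have D2: "(x - k) powr (\<beta> - 1) \<le> (x/2) powr (\<beta> - 1)"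
      by (rule powr_mono2') (use xk \<beta> x in auto)
    have D3: "(x/2) powr (\<beta> - 1) \<le> 2 * x powr (\<beta> - 1)"
    proof -
      have eq: "(x/2) powr (\<beta> - 1) = x powr (\<beta> - 1) / 2 powr (\<beta> - 1)" by (rule powr_divide)
      have "2 powr (\<beta> - 1) \<ge> 2 powr (-1)" by (rule powr_mono) (use \<beta> in auto)
      then have "2 powr (\<beta> - 1) \<ge> 1/2" by (simp add: powr_minus)
      then have "x powr (\<beta> - 1) / 2 powr (\<beta> - 1) \<le> x powr (\<beta> - 1) / (1/2)"
        by (intro divide_left_mono) auto
      then show ?thesis using eq by simp
    qed
    have "(x - k) powr (\<beta> - 1) \<le> 2 * x powr (\<beta> - 1)" using D2 D3 by linarith
    then have "k * (x - k) powr (\<beta> - 1) \<le> k * (2 * x powr (\<beta> - 1))" using k by (intro mult_left_mono) auto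
    then have D: "x powr \<beta> - (x - k) powr \<beta> \<le> 2 * k * x powr (\<beta> - 1)" using D1 by simp
    have "- \<delta> * (x - k) powr \<beta> \<le> - \<delta> * x powr \<beta> + 2 * \<delta> * k * x powr (\<beta> - 1)"
    proof -
      have "\<delta> * (x powr \<beta> - (x - k) powr \<beta>) \<le> \<delta> * (2 * k * x powr (\<beta> - 1))" using D \<delta> by (intro mult_left_mono) auto
      then show ?thesis by (simp add: algebra_simps)
    qed
    then have E: "exp (- \<delta> * (x - k) powr \<beta>) \<le> exp (- \<delta> * x powr \<beta>) * exp (2 * \<delta> * k * x powr (\<beta> - 1))"
      by (simp flip: exp_add)
    have "q (x - k) = L (x - k) * exp (- \<delta> * (x - k) powr \<beta>)" using xk by (intro qL) auto
    also have "\<dots> \<le> (exp \<eta> * L x) * (exp (- \<delta> * x powr \<beta>) * exp (2 * \<delta> * k * x powr (\<beta> - 1)))"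
      by (rule mult_mono) (use L1 E Lpos[of "x-k"] xk in auto)
    also have "\<dots> = exp \<eta> * exp (2 * \<delta> * k * x powr (\<beta> - 1)) * q x"
      using qL[of x] x by simp
    finally show ?thesis .
  qed
  have Qlow: "q (x + w) \<ge> exp (-\<eta>) * exp (- \<delta> * w * x powr (\<beta> - 1)) * q x"
    if x: "x > 0" and w: "0 \<le> w" "w \<le> x" and U: "\<forall>y. x \<le> y \<and> y \<le> 2*x \<longrightarrow> exp (-\<eta>) * L x \<le> L y" for x w \<eta>
  proof -
    have L1: "exp (-\<eta>) * L x \<le> L (x + w)" using U w by auto
    have D1: "(x + w) powr \<beta> - x powr \<beta> \<le> ((x + w) - x) * x powr (\<beta> - 1)"
      by (rule powr_diff_le) (use x w \<beta> in auto)
    have "- \<delta> * x powr \<beta> - \<delta> * w * x powr (\<beta> - 1) \<le> - \<delta> * (x + w) powr \<beta>"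
    proof -
      have "\<delta> * ((x + w) powr \<beta> - x powr \<beta>) \<le> \<delta> * (w * x powr (\<beta> - 1))" using D1 \<delta> by (intro mult_left_mono) auto
      then show ?thesis by (simp add: algebra_simps)
    qed
    then have E: "exp (- \<delta> * x powr \<beta>) * exp (- \<delta> * w * x powr (\<beta> - 1)) \<le> exp (- \<delta> * (x + w) powr \<beta>)"
      by (simp flip: exp_add)
    have "exp (-\<eta>) * exp (- \<delta> * w * x powr (\<beta> - 1)) * q x =
          (exp (-\<eta>) * L x) * (exp (- \<delta> * x powr \<beta>) * exp (- \<delta> * w * x powr (\<beta> - 1)))"
      using qL[of x] x by simp
    also have "\<dots> \<le> L (x + w) * exp (- \<delta> * (x + w) powr \<beta>)"
      by (rule mult_mono) (use L1 E Lpos[of "x+w"] x w in auto)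
    also have "\<dots> = q (x + w)" using x w by (intro qL[symmetric]) auto
    finally show ?thesis .
  qed
  show ?thesis
  proof (rule final_conv[OF p(1) qpos])
    fix \<epsilon> :: real assume e: "\<epsilon> > 0" "\<epsilon> \<le> 1"
    define t where "t = ln (1 + \<epsilon>/2)"
    have t3: "t \<le> \<epsilon>/2" unfolding t_def by (rule ln_add_one_self_le_self) (use e in auto)
    have t: "t > 0" "exp t = 1 + \<epsilon>/2" "t \<le> \<epsilon>/2" using e t3 by (auto simp: t_def)
    define \<eta> where "\<eta> = t/2"
    define \<theta> where "\<theta> = t / (4 * \<delta>)"
    have th: "\<theta> > 0" "\<delta> * \<theta> = t/4" using t \<delta> by (auto simp: \<theta>_def)
    have et: "\<eta> > 0" using t by (simp add: \<eta>_def)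
    define \<rho> where "\<rho> = min (1/2) (\<epsilon> / (8 * exp \<eta>))"
    have rho: "\<rho> > 0" "\<rho> \<le> 1/2" "exp \<eta> * (2 * \<rho>) \<le> \<epsilon>/4"
    proof -
      show "\<rho> > 0" "\<rho> \<le> 1/2" using e by (auto simp: \<rho>_def)
      have "\<rho> \<le> \<epsilon> / (8 * exp \<eta>)" by (simp add: \<rho>_def)
      then have "exp \<eta> * (2 * \<rho>) \<le> exp \<eta> * (2 * (\<epsilon> / (8 * exp \<eta>)))" by (intro mult_left_mono) auto
      also have "\<dots> = \<epsilon>/4" by simp
      finally show "exp \<eta> * (2 * \<rho>) \<le> \<epsilon>/4" .
    qed
    have pt: "p\<^sup>2 * \<theta>\<^sup>2 > 0" using p th by simp
    have F1: "eventually (\<lambda>x::real. x \<ge> 1) at_top" by simp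
    have F2: "eventually (\<lambda>x. x powr (1 - \<beta>) \<le> (1 / (8 * \<theta>)) * x) at_top"
      using \<beta> th by (intro powr_small) auto
    have F3: "eventually (\<lambda>x. (4 * \<delta> * \<theta> - ln \<rho>) / (2 * p\<^sup>2 * \<theta>\<^sup>2) \<le> x powr (1 - 2 * \<beta>)) at_top"
      using \<beta> by (intro powr_big) auto
    have F4: "eventually (\<lambda>x. - (3/2) * ln (\<epsilon>/4) / (p\<^sup>2 * \<theta>\<^sup>2) \<le> x powr (1 - 2 * \<beta>)) at_top"
      using \<beta> by (intro powr_big) auto
    have F5: "eventually (\<lambda>x. exp (- (p\<^sup>2/8) * x) \<le> (\<epsilon>/4) * q x) at_top"
      using p e by (intro expq) auto
    from F1 F2 F3 F4 F5 UC[OF et]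
    show "eventually (\<lambda>x. \<forall>j. real j = p * x \<longrightarrow> T j \<le> (1+\<epsilon>) * q x \<and> (1-\<epsilon>) * q x \<le> T j) at_top"
    proof eventually_elim
      case (elim x)
      have x: "x > 0" using elim by simp
      have qx: "q x > 0" by (rule qpos)
      define hh where "hh = \<theta> * x powr (1 - \<beta>)"
      define A where "A = x powr (1 - 2 * \<beta>)"
      have A0: "A \<ge> 0" by (simp add: A_def)
      have hh0: "hh > 0" using th x by (simp add: hh_def)
      have hh8: "hh \<le> x / 8"
      proof -
        have "\<theta> * x powr (1 - \<beta>) \<le> \<theta> * ((1 / (8 * \<theta>)) * x)" using elim(2) th by (intro mult_left_mono) auto
        then show ?thesis using th by (simp add: hh_def)
      qed
      have hhx: "hh * x powr (\<beta> - 1) = \<theta>" unfolding hh_def by (rule h_inv[OF x])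
      have sq: "(p * (c * hh))\<^sup>2 / x = p\<^sup>2 * c\<^sup>2 * \<theta>\<^sup>2 * A" for c
        unfolding hh_def A_def by (rule sq_h[OF x])
      show ?case
      proof (intro allI impI conjI)
        fix j assume j: "real j = p * x"
        define N where "N = \<lfloor>x / (2 * hh)\<rfloor>"
        have x2h: "x / (2 * hh) \<ge> 4" using hh8 hh0 by (simp add: field_simps)
        have N4: "N \<ge> 4" using x2h by (simp add: N_def le_floor_iff)
        define K where "K = nat N - 1"
        have K1: "real (K + 1) = real_of_int N" using N4 by (simp add: K_def)
        have KA: "real (K + 1) * hh \<le> x / 2"
        proof -
          have "real_of_int N \<le> x / (2 * hh)" unfolding N_def by simp
          then have "real_of_int N * hh \<le> x / (2 * hh) * hh" using hh0 by (intro mult_right_mono) auto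
          then show ?thesis using K1 hh0 by simp
        qed
        have KB: "real (K + 1) * hh \<ge> x / 4"
        proof -
          have "x / (2 * hh) - 1 \<le> real_of_int N" unfolding N_def by linarith
          then have "(x / (2 * hh) - 1) * hh \<le> real_of_int N * hh" using hh0 by (intro mult_right_mono) auto
          then have "x / 2 - hh \<le> real_of_int N * hh" using hh0 by (simp add: algebra_simps)
          then have "x / 4 \<le> real_of_int N * hh" using hh8 x by linarith
          then show ?thesis using K1 by simp
        qed
        have U0: "T j \<le> q (x - hh) + (\<Sum>i\<in>{1..K}. q (x - real (i+1) * hh) * exp (-2 * (p * (real i * hh))\<^sup>2 / x))
              + exp (-2 * (p * (real (K+1) * hh))\<^sup>2 / x)"
          by (rule UB) (use x hh0 j KA in auto)
        have T0: "q (x - hh) \<le> (1 + \<epsilon>/2) * q x"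
        proof -
          have "q (x - hh) \<le> exp \<eta> * exp (2 * \<delta> * hh * x powr (\<beta> - 1)) * q x"
            by (rule Qup) (use x hh0 hh8 elim(6) in auto)
          also have "2 * \<delta> * hh * x powr (\<beta> - 1) = 2 * (\<delta> * \<theta>)" using hhx by (simp add: mult.assoc)
          also have "exp \<eta> * exp (2 * (\<delta> * \<theta>)) = exp t" using th by (simp add: \<eta>_def flip: exp_add)
          finally show ?thesis using t by simp
        qed
        define r where "r = exp (4 * \<delta> * \<theta> - 2 * p\<^sup>2 * \<theta>\<^sup>2 * A)"
        have r: "0 \<le> r" "r \<le> \<rho>"
        proof -
          show "0 \<le> r" by (simp add: r_def)
          have "(4 * \<delta> * \<theta> - ln \<rho>) / (2 * p\<^sup>2 * \<theta>\<^sup>2) * (2 * p\<^sup>2 * \<theta>\<^sup>2) \<le> A * (2 * p\<^sup>2 * \<theta>\<^sup>2)"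
            using elim(3) pt by (intro mult_right_mono) (auto simp: A_def)
          moreover have "(4 * \<delta> * \<theta> - ln \<rho>) / (2 * p\<^sup>2 * \<theta>\<^sup>2) * (2 * p\<^sup>2 * \<theta>\<^sup>2) = 4 * \<delta> * \<theta> - ln \<rho>"
            using p th by (simp add: field_simps)
          ultimately have "4 * \<delta> * \<theta> - ln \<rho> \<le> A * (2 * p\<^sup>2 * \<theta>\<^sup>2)" by simp
          then have "4 * \<delta> * \<theta> - 2 * p\<^sup>2 * \<theta>\<^sup>2 * A \<le> ln \<rho>" by (simp add: algebra_simps)
          then have "r \<le> exp (ln \<rho>)" unfolding r_def by simp
          then show "r \<le> \<rho>" using rho by simp
        qed
        have S: "(\<Sum>i\<in>{1..K}. q (x - real (i+1) * hh) * exp (-2 * (p * (real i * hh))\<^sup>2 / x)) \<le> (\<epsilon>/4) * q x"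
        proof -
          have "(\<Sum>i\<in>{1..K}. q (x - real (i+1) * hh) * exp (-2 * (p * (real i * hh))\<^sup>2 / x))
                \<le> (\<Sum>i\<in>{1..K}. exp \<eta> * q x * r ^ i)"
          proof (rule sum_mono)
            fix i assume i: "i \<in> {1..K}"
            have i1: "real i \<ge> 1" using i by simp
            have "real (i+1) \<le> real (K+1)" using i by simp
            then have "real (i+1) * hh \<le> real (K+1) * hh" using hh0 by (intro mult_right_mono) auto
            then have ih: "real (i+1) * hh \<le> x/2" using KA by linarith
            have q1: "q (x - real (i+1) * hh) \<le> exp \<eta> * exp (2 * \<delta> * (real (i+1) * hh) * x powr (\<beta> - 1)) * q x"
              by (rule Qup) (use x hh0 ih elim(6) in auto)
            have "2 * \<delta> * (real (i+1) * hh) * x powr (\<beta> - 1) = 2 * \<delta> * real (i+1) * (hh * x powr (\<beta> - 1))"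
              by (simp only: mult_ac)
            then have ex1: "2 * \<delta> * (real (i+1) * hh) * x powr (\<beta> - 1) = 2 * (\<delta> * \<theta>) * real (i+1)"
              using hhx by (simp only: mult_ac)
            have ex2: "-2 * (p * (real i * hh))\<^sup>2 / x = - 2 * (p\<^sup>2 * (real i)\<^sup>2 * \<theta>\<^sup>2 * A)"
              using sq[of "real i"] by simp
            have expo: "2 * (\<delta> * \<theta>) * real (i+1) + - 2 * (p\<^sup>2 * (real i)\<^sup>2 * \<theta>\<^sup>2 * A)
                        \<le> real i * (4 * \<delta> * \<theta> - 2 * p\<^sup>2 * \<theta>\<^sup>2 * A)"
            proof -
              have "\<delta> * \<theta> \<ge> 0" using th t by simp
              then have a: "2 * (\<delta> * \<theta>) * real (i+1) \<le> 2 * (\<delta> * \<theta>) * (2 * real i)"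
                using i1 by (intro mult_left_mono) auto
              have "p\<^sup>2 * \<theta>\<^sup>2 * A \<ge> 0" using A0 by simp
              moreover have "real i \<le> (real i)\<^sup>2" using i1 by (simp add: power2_eq_square)
              ultimately have b: "(p\<^sup>2 * \<theta>\<^sup>2 * A) * real i \<le> (p\<^sup>2 * \<theta>\<^sup>2 * A) * (real i)\<^sup>2"
                by (intro mult_left_mono) auto
              show ?thesis using a b by (simp add: algebra_simps)
            qed
            have "q (x - real (i+1) * hh) * exp (-2 * (p * (real i * hh))\<^sup>2 / x)
                  \<le> (exp \<eta> * exp (2 * (\<delta> * \<theta>) * real (i+1)) * q x) * exp (- 2 * (p\<^sup>2 * (real i)\<^sup>2 * \<theta>\<^sup>2 * A))"
              using q1 unfolding ex1 ex2 by (intro mult_right_mono) auto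
            also have "\<dots> = exp \<eta> * q x * exp (2 * (\<delta> * \<theta>) * real (i+1) + - 2 * (p\<^sup>2 * (real i)\<^sup>2 * \<theta>\<^sup>2 * A))"
              by (simp only: exp_add mult_ac)
            also have "\<dots> \<le> exp \<eta> * q x * exp (real i * (4 * \<delta> * \<theta> - 2 * p\<^sup>2 * \<theta>\<^sup>2 * A))"
              using expo qx by (intro mult_left_mono) auto
            also have "exp (real i * (4 * \<delta> * \<theta> - 2 * p\<^sup>2 * \<theta>\<^sup>2 * A)) = r ^ i"
              unfolding r_def by (rule exp_of_nat_mult)
            finally show "q (x - real (i+1) * hh) * exp (-2 * (p * (real i * hh))\<^sup>2 / x) \<le> exp \<eta> * q x * r ^ i" .
          qed
          also have "\<dots> = exp \<eta> * q x * (\<Sum>i\<in>{1..K}. r ^ i)" by (simp add: sum_distrib_left)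
          also have "\<dots> \<le> exp \<eta> * q x * (2 * r)"
            using geom_bound[of r K] r rho qx by (intro mult_left_mono) auto
          also have "\<dots> \<le> exp \<eta> * q x * (2 * \<rho>)" using r qx by (intro mult_left_mono) auto
          also have "\<dots> = (exp \<eta> * (2 * \<rho>)) * q x" by simp
          also have "\<dots> \<le> (\<epsilon>/4) * q x" using rho qx by (intro mult_right_mono) auto
          finally show ?thesis .
        qed
        have La: "exp (-2 * (p * (real (K+1) * hh))\<^sup>2 / x) \<le> (\<epsilon>/4) * q x"
        proof -
          have "(x/4)\<^sup>2 \<le> (real (K+1) * hh)\<^sup>2" using KB x by (intro power_mono) auto
          then have "p\<^sup>2 * (x/4)\<^sup>2 \<le> p\<^sup>2 * (real (K+1) * hh)\<^sup>2" by (intro mult_left_mono) auto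
          then have "p\<^sup>2 * (x/4)\<^sup>2 / x \<le> p\<^sup>2 * (real (K+1) * hh)\<^sup>2 / x" using x by (intro divide_right_mono) auto
          moreover have "p\<^sup>2 * (x/4)\<^sup>2 / x = (p\<^sup>2/16) * x" using x by (simp add: power2_eq_square)
          ultimately have z: "(p\<^sup>2/16) * x \<le> p\<^sup>2 * (real (K+1) * hh)\<^sup>2 / x" by simp
          have "-2 * (p * (real (K+1) * hh))\<^sup>2 / x = -2 * (p\<^sup>2 * (real (K+1) * hh)\<^sup>2 / x)"
            by (simp add: power_mult_distrib)
          with z have "-2 * (p * (real (K+1) * hh))\<^sup>2 / x \<le> - (p\<^sup>2/8) * x" by linarith
          then have "exp (-2 * (p * (real (K+1) * hh))\<^sup>2 / x) \<le> exp (- (p\<^sup>2/8) * x)" by simp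
          then show ?thesis using elim(5) by linarith
        qed
        show "T j \<le> (1+\<epsilon>) * q x" using U0 T0 S La by (simp add: algebra_simps)
      next
        fix j assume j: "real j = p * x"
        have L0: "q (x + hh) * (1 - exp (-2 * (p * hh)\<^sup>2 / (x + hh + 1))) \<le> T j"
          by (rule LB[OF x hh0 j])
        have Q1: "q (x + hh) \<ge> (1 - \<epsilon>/2) * q x"
        proof -
          have "q (x + hh) \<ge> exp (-\<eta>) * exp (- \<delta> * hh * x powr (\<beta> - 1)) * q x"
            by (rule Qlow) (use x hh0 hh8 elim(6) in auto)
          moreover have "exp (-\<eta>) * exp (- \<delta> * hh * x powr (\<beta> - 1)) = exp (- (3/4) * t)"
          proof -
            have "- \<delta> * hh * x powr (\<beta> - 1) = - (\<delta> * \<theta>)" using hhx by (simp add: mult.assoc)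
            then show ?thesis using th by (simp add: \<eta>_def flip: exp_add)
          qed
          moreover have "exp (- (3/4) * t) \<ge> 1 - \<epsilon>/2"
          proof -
            have "1 + (- (3/4) * t) \<le> exp (- (3/4) * t)" by (rule exp_ge_add_one_self)
            then show ?thesis using t by linarith
          qed
          ultimately show ?thesis using qx by (smt (verit) mult_right_mono)
        qed
        have E1: "exp (-2 * (p * hh)\<^sup>2 / (x + hh + 1)) \<le> \<epsilon>/4"
        proof -
          have den: "0 < x + hh + 1" "x + hh + 1 \<le> 3 * x" using x hh0 hh8 elim(1) by auto
          have "(p * hh)\<^sup>2 / (3 * x) \<le> (p * hh)\<^sup>2 / (x + hh + 1)"
            using den by (intro divide_left_mono) auto
          moreover have "(p * hh)\<^sup>2 / (3 * x) = (p\<^sup>2 * \<theta>\<^sup>2 * A) / 3"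
            using sq[of 1] by simp
          ultimately have a: "-2 * (p * hh)\<^sup>2 / (x + hh + 1) \<le> - (2/3) * (p\<^sup>2 * \<theta>\<^sup>2 * A)" by simp
          have "- (3/2) * ln (\<epsilon>/4) / (p\<^sup>2 * \<theta>\<^sup>2) * (p\<^sup>2 * \<theta>\<^sup>2) \<le> A * (p\<^sup>2 * \<theta>\<^sup>2)"
            using elim(4) pt by (intro mult_right_mono) (auto simp: A_def)
          moreover have "- (3/2) * ln (\<epsilon>/4) / (p\<^sup>2 * \<theta>\<^sup>2) * (p\<^sup>2 * \<theta>\<^sup>2) = - (3/2) * ln (\<epsilon>/4)"
            using p th by (simp add: field_simps)
          ultimately have "- (3/2) * ln (\<epsilon>/4) \<le> A * (p\<^sup>2 * \<theta>\<^sup>2)" by simp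
          then have "- (2/3) * (p\<^sup>2 * \<theta>\<^sup>2 * A) \<le> ln (\<epsilon>/4)" by (simp add: algebra_simps)
          with a have "-2 * (p * hh)\<^sup>2 / (x + hh + 1) \<le> ln (\<epsilon>/4)" by linarith
          then have "exp (-2 * (p * hh)\<^sup>2 / (x + hh + 1)) \<le> exp (ln (\<epsilon>/4))" by simp
          then show ?thesis using e by simp
        qed
        have "(1 - \<epsilon>/2) * q x * (1 - \<epsilon>/4) \<le> q (x + hh) * (1 - exp (-2 * (p * hh)\<^sup>2 / (x + hh + 1)))"
          by (rule mult_mono) (use Q1 E1 e qx q0[of "x + hh"] in auto)
        moreover have "(1 - \<epsilon>) * q x \<le> (1 - \<epsilon>/2) * q x * (1 - \<epsilon>/4)"
        proof -
          have "1 - \<epsilon> \<le> (1 - \<epsilon>/2) * (1 - \<epsilon>/4)" using e by (simp add: algebra_simps)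
          then have "(1 - \<epsilon>) * q x \<le> ((1 - \<epsilon>/2) * (1 - \<epsilon>/4)) * q x" using qx by (intro mult_right_mono) auto
          then show ?thesis by (simp add: algebra_simps)
        qed
        ultimately show "(1-\<epsilon>) * q x \<le> T j" using L0 by linarith
      qed
    qed
  qed
qed

locale thin = prob_space M for M :: "'a measure" +
  fixes B :: "nat \<Rightarrow> 'a \<Rightarrow> nat" and v :: "'a \<Rightarrow> nat" and p :: real
  assumes p: "0 < p" "p < 1"
    and indep: "indep_vars (\<lambda>_. count_space UNIV)
                  (\<lambda>i. case i of None \<Rightarrow> v | Some n \<Rightarrow> B n) (UNIV :: nat option set)"
    and bern_vals: "\<And>n \<omega>. n \<ge> 1 \<Longrightarrow> \<omega> \<in> space M \<Longrightarrow> B n \<omega> \<in> {0, 1}"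
    and bern_p: "\<And>n. n \<ge> 1 \<Longrightarrow> measure M {\<omega> \<in> space M. B n \<omega> = 1} = p"
begin

definition Y :: "nat option \<Rightarrow> 'a \<Rightarrow> nat" where "Y i = (case i of None \<Rightarrow> v | Some n \<Rightarrow> B n)"
definition S :: "nat \<Rightarrow> 'a \<Rightarrow> nat" where "S m \<omega> = (\<Sum>l\<in>{1..m}. B l \<omega>)"

lemma indepY: "indep_vars (\<lambda>_. count_space UNIV) Y UNIV"
  using indep unfolding Y_def[abs_def] .

lemma rvY: "Y i \<in> measurable M (count_space UNIV)"
  using indepY unfolding indep_vars_def by auto

lemma rv_v[measurable]: "v \<in> measurable M (count_space UNIV)"
  using rvY[of None] by (simp add: Y_def)

lemma rv_B[measurable]: "B n \<in> measurable M (count_space UNIV)"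
  using rvY[of "Some n"] by (simp add: Y_def)

lemma rv_S[measurable]: "S m \<in> measurable M (count_space UNIV)"
  unfolding S_def[abs_def] by measurable

lemma S_mono: "m \<le> m' \<Longrightarrow> S m \<omega> \<le> S m' \<omega>"
  unfolding S_def by (rule sum_mono2) auto

lemma expB: assumes "l \<ge> 1" shows "expectation (\<lambda>\<omega>. real (B l \<omega>)) = p"
proof -
  have "expectation (\<lambda>\<omega>. real (B l \<omega>)) = expectation (indicator {\<omega> \<in> space M. B l \<omega> = 1})"
    by (rule Bochner_Integration.integral_cong[OF refl]) (use bern_vals[OF assms] in \<open>auto simp: indicator_def\<close>)
  also have "\<dots> = prob {\<omega> \<in> space M. B l \<omega> = 1}"
    by (simp add: Int_absorb2 subset_eq)
  finally show ?thesis using bern_p[OF assms] by simp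
qed

lemma hoeffding:
  assumes m: "m \<ge> 1" and e: "\<epsilon> \<ge> 0"
  shows "prob {\<omega> \<in> space M. real (S m \<omega>) \<ge> m * p + \<epsilon>} \<le> exp (-2 * \<epsilon>\<^sup>2 / m)"
    and "prob {\<omega> \<in> space M. real (S m \<omega>) \<le> m * p - \<epsilon>} \<le> exp (-2 * \<epsilon>\<^sup>2 / m)"
proof -
  define I where "I = Some ` {1..m}"
  interpret H: Hoeffding_ineq M I "\<lambda>i \<omega>. real (Y i \<omega>)" "\<lambda>_. 0" "\<lambda>_. 1" "\<Sum>i\<in>I. expectation (\<lambda>\<omega>. real (Y i \<omega>))"
  proof unfold_locales
    show "finite I" by (simp add: I_def)
    show "indep_vars (\<lambda>_. borel) (\<lambda>i \<omega>. real (Y i \<omega>)) I"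
      by (rule indep_vars_compose2[OF indep_vars_subset[OF indepY]]) auto
    fix i assume "i \<in> I"
    then obtain l where l: "i = Some l" "l \<ge> 1" by (auto simp: I_def)
    show "AE x in M. real (Y i x) \<in> {0..1}"
      by (rule AE_I2) (use bern_vals[OF l(2)] in \<open>force simp: Y_def l\<close>)
  qed simp
  have mu: "(\<Sum>i\<in>I. expectation (\<lambda>\<omega>. real (Y i \<omega>))) = m * p"
    by (simp add: I_def sum.reindex Y_def expB)
  have sumS: "(\<Sum>i\<in>I. real (Y i \<omega>)) = real (S m \<omega>)" for \<omega>
    by (simp add: I_def sum.reindex Y_def S_def)
  have pos: "(\<Sum>i\<in>I. (1 - 0::real)\<^sup>2) = m" using m by (simp add: I_def card_image)
  show "prob {\<omega> \<in> space M. real (S m \<omega>) \<ge> m * p + \<epsilon>} \<le> exp (-2 * \<epsilon>\<^sup>2 / m)"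
    using H.Hoeffding_ineq_ge[OF e] m unfolding mu sumS pos by simp
  show "prob {\<omega> \<in> space M. real (S m \<omega>) \<le> m * p - \<epsilon>} \<le> exp (-2 * \<epsilon>\<^sup>2 / m)"
    using H.Hoeffding_ineq_le[OF e] m unfolding mu sumS pos by simp
qed

lemma indep_vS:
  "prob ({\<omega> \<in> space M. y \<le> real (v \<omega>)} \<inter> {\<omega> \<in> space M. j \<le> real (S m \<omega>)}) =
     prob {\<omega> \<in> space M. y \<le> real (v \<omega>)} * prob {\<omega> \<in> space M. j \<le> real (S m \<omega>)}"
proof -
  have iv: "indep_var (PiM {None} (\<lambda>_. count_space UNIV)) (\<lambda>\<omega>. restrict (\<lambda>i. Y i \<omega>) {None})
     (PiM (Some ` {1..m}) (\<lambda>_. count_space UNIV)) (\<lambda>\<omega>. restrict (\<lambda>i. Y i \<omega>) (Some ` {1..m}))"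
    by (rule indep_var_restrict[OF indepY]) auto
  have iv2: "indep_var (count_space UNIV) ((\<lambda>f. f None) \<circ> (\<lambda>\<omega>. restrict (\<lambda>i. Y i \<omega>) {None}))
     (count_space UNIV) ((\<lambda>f. \<Sum>l\<in>{1..m}. f (Some l)) \<circ> (\<lambda>\<omega>. restrict (\<lambda>i. Y i \<omega>) (Some ` {1..m})))"
    by (rule indep_var_compose[OF iv]) measurable
  have e1: "((\<lambda>f. f None) \<circ> (\<lambda>\<omega>. restrict (\<lambda>i. Y i \<omega>) {None})) = v"
    by (auto simp: Y_def)
  have e2: "((\<lambda>f. \<Sum>l\<in>{1..m}. f (Some l)) \<circ> (\<lambda>\<omega>. restrict (\<lambda>i. Y i \<omega>) (Some ` {1..m}))) = S m"
    by (auto simp: Y_def S_def fun_eq_iff)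
  have iv3: "indep_var (count_space UNIV) v (count_space UNIV) (S m)"
    using iv2 unfolding e1 e2 .
  from indep_varD[OF iv3, of "{n. y \<le> real n}" "{n. j \<le> real n}"]
  show ?thesis
    by (simp add: vimage_def Int_def conj_commute conj_left_commute)
qed

definition q :: "real \<Rightarrow> real" where "q y = prob {\<omega> \<in> space M. y \<le> real (v \<omega>)}"
definition T :: "nat \<Rightarrow> real" where "T j = prob {\<omega> \<in> space M. thinned B v \<omega> \<ge> j}"

lemma thinned_S: "thinned B v \<omega> = S (v \<omega>) \<omega>"
  by (simp add: thinned_def S_def)

lemma rv_thinned[measurable]: "thinned B v \<in> measurable M (count_space UNIV)"
proof -
  have "(\<lambda>\<omega>. S (v \<omega>) \<omega>) \<in> measurable M (count_space UNIV)" by measurable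
  then show ?thesis by (simp add: thinned_S[abs_def])
qed

lemma hup:
  assumes x: "0 < x" and d: "d \<ge> 0" and m: "real m \<le> x - d" and j: "real j = p * x"
  shows "prob {\<omega> \<in> space M. real j \<le> real (S m \<omega>)} \<le> exp (-2 * (p*d)\<^sup>2 / x)"
proof (cases "m = 0")
  case True
  have "real j > 0" using j x p by simp
  then have "{\<omega> \<in> space M. real j \<le> real (S m \<omega>)} = {}" using True by (auto simp: S_def)
  then show ?thesis by (metis exp_ge_zero measure_empty)
next
  case False
  define \<epsilon> where "\<epsilon> = real j - m * p"
  have "p * d \<le> p * (x - real m)" using m p by (intro mult_left_mono) auto
  then have e1: "\<epsilon> \<ge> p * d" using j by (simp add: \<epsilon>_def algebra_simps)
  have pd: "p * d \<ge> 0" using p d by simp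
  have "prob {\<omega> \<in> space M. real j \<le> real (S m \<omega>)} = prob {\<omega> \<in> space M. real (S m \<omega>) \<ge> m * p + \<epsilon>}"
    by (simp add: \<epsilon>_def)
  also have "\<dots> \<le> exp (-2 * \<epsilon>\<^sup>2 / m)"
    using hoeffding(1)[of m \<epsilon>] False e1 pd by simp
  also have "\<dots> \<le> exp (-2 * (p*d)\<^sup>2 / x)"
  proof -
    have sq: "(p*d)\<^sup>2 \<le> \<epsilon>\<^sup>2" using e1 pd by (intro power_mono) auto
    have mx: "real m \<le> x" using m d by simp
    have "(p*d)\<^sup>2 / x \<le> \<epsilon>\<^sup>2 / x" using sq x by (simp add: divide_right_mono)
    also have "\<dots> \<le> \<epsilon>\<^sup>2 / m" using mx False by (intro divide_left_mono) auto
    finally show ?thesis by simp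
  qed
  finally show ?thesis .
qed

lemma hlow:
  assumes x: "0 < x" and w: "w > 0" and j: "real j = p * x"
  shows "prob {\<omega> \<in> space M. real j \<le> real (S (nat \<lceil>x + w\<rceil>) \<omega>)} \<ge> 1 - exp (-2 * (p*w)\<^sup>2 / (x + w + 1))"
proof -
  define m where "m = nat \<lceil>x + w\<rceil>"
  have "real_of_int \<lceil>x + w\<rceil> > 0" using le_of_int_ceiling[of "x+w"] x w by linarith
  then have "\<lceil>x + w\<rceil> \<ge> 1" by simp
  then have m1: "m \<ge> 1" by (simp add: m_def le_nat_iff)
  have mreal: "real m = real_of_int \<lceil>x + w\<rceil>" using \<open>\<lceil>x + w\<rceil> \<ge> 1\<close> by (simp add: m_def)
  have mge: "real m \<ge> x + w" using mreal ceiling_correct[of "x+w"] by linarith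
  have mle: "real m \<le> x + w + 1" using mreal ceiling_correct[of "x+w"] by linarith
  define \<epsilon> where "\<epsilon> = m * p - real j"
  have "p * w \<le> p * (real m - x)" using mge p by (intro mult_left_mono) auto
  then have e1: "\<epsilon> \<ge> p * w" using j by (simp add: \<epsilon>_def algebra_simps)
  have pw: "p * w \<ge> 0" using p w by simp
  have A: "{\<omega> \<in> space M. real (S m \<omega>) \<le> m * p - \<epsilon>} \<in> events" by measurable
  have "prob {\<omega> \<in> space M. real (S m \<omega>) \<le> m * p - \<epsilon>} \<le> exp (-2 * \<epsilon>\<^sup>2 / m)"
    using hoeffding(2)[of m \<epsilon>] m1 e1 pw by simp
  also have "\<dots> \<le> exp (-2 * (p*w)\<^sup>2 / (x + w + 1))"
  proof -
    have sq: "(p*w)\<^sup>2 \<le> \<epsilon>\<^sup>2" using e1 pw by (intro power_mono) auto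
    have "(p*w)\<^sup>2 / (x + w + 1) \<le> \<epsilon>\<^sup>2 / (x + w + 1)" using sq x w by (simp add: divide_right_mono)
    also have "\<dots> \<le> \<epsilon>\<^sup>2 / m" using mle m1 by (intro divide_left_mono) auto
    finally show ?thesis by simp
  qed
  finally have h: "prob {\<omega> \<in> space M. real (S m \<omega>) \<le> m * p - \<epsilon>} \<le> exp (-2 * (p*w)\<^sup>2 / (x + w + 1))" .
  have "space M - {\<omega> \<in> space M. real (S m \<omega>) \<le> m * p - \<epsilon>} \<subseteq> {\<omega> \<in> space M. real j \<le> real (S m \<omega>)}"
    by (auto simp: \<epsilon>_def)
  then have "prob (space M - {\<omega> \<in> space M. real (S m \<omega>) \<le> m * p - \<epsilon>}) \<le> prob {\<omega> \<in> space M. real j \<le> real (S m \<omega>)}"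
    by (intro finite_measure_mono) measurable
  moreover have "prob (space M - {\<omega> \<in> space M. real (S m \<omega>) \<le> m * p - \<epsilon>}) = 1 - prob {\<omega> \<in> space M. real (S m \<omega>) \<le> m * p - \<epsilon>}"
    using A by (rule prob_compl)
  ultimately show ?thesis using h unfolding m_def by linarith
qed

lemma lower_bound:
  assumes x: "0 < x" and w: "w > 0" and j: "real j = p * x"
  shows "T j \<ge> q (x + w) * (1 - exp (-2 * (p*w)\<^sup>2 / (x + w + 1)))"
proof -
  define m where "m = nat \<lceil>x + w\<rceil>"
  have sub: "{\<omega> \<in> space M. x + w \<le> real (v \<omega>)} \<inter> {\<omega> \<in> space M. real j \<le> real (S m \<omega>)}
      \<subseteq> {\<omega> \<in> space M. thinned B v \<omega> \<ge> j}"
  proof safe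
    fix \<omega> assume \<omega>: "\<omega> \<in> space M" "x + w \<le> real (v \<omega>)" "real j \<le> real (S m \<omega>)"
    have "m \<le> v \<omega>" using \<omega>(2) unfolding m_def by (simp add: nat_le_iff ceiling_le_iff)
    then have "S m \<omega> \<le> S (v \<omega>) \<omega>" by (rule S_mono)
    then show "j \<le> thinned B v \<omega>" using \<omega>(3) by (simp add: thinned_S)
  qed
  have "q (x + w) * (1 - exp (-2 * (p*w)\<^sup>2 / (x + w + 1))) \<le> q (x + w) * prob {\<omega> \<in> space M. real j \<le> real (S m \<omega>)}"
    by (rule mult_left_mono) (use hlow[OF x w j] in \<open>auto simp: m_def q_def\<close>)
  also have "\<dots> = prob ({\<omega> \<in> space M. x + w \<le> real (v \<omega>)} \<inter> {\<omega> \<in> space M. real j \<le> real (S m \<omega>)})"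
    unfolding q_def by (rule indep_vS[symmetric])
  also have "\<dots> \<le> T j" unfolding T_def by (intro finite_measure_mono[OF sub]) measurable
  finally show ?thesis .
qed

lemma upper_bound:
  fixes K :: nat and x h :: real
  assumes x: "0 < x" and h: "0 < h" and j: "real j = p * x" and K: "(K+1) * h \<le> x"
  shows "T j \<le> q (x - h) + (\<Sum>i\<in>{1..K}. q (x - (i+1) * h) * exp (-2 * (p*(i*h))\<^sup>2 / x))
               + exp (-2 * (p*((K+1)*h))\<^sup>2 / x)"
proof -
  define mi where "mi i = nat \<lfloor>x - real i * h\<rfloor>" for i :: nat
  define V where "V = {\<omega> \<in> space M. x - h \<le> real (v \<omega>)}"
  define W where "W i = {\<omega> \<in> space M. x - (i+1) * h \<le> real (v \<omega>)} \<inter> {\<omega> \<in> space M. real j \<le> real (S (mi i) \<omega>)}" for i :: nat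
  define Z where "Z = {\<omega> \<in> space M. real j \<le> real (S (mi (K+1)) \<omega>)}"
  have mi_le: "real (mi i) \<le> x - i * h" if "real i * h \<le> x" for i
    using that by (simp add: mi_def)
  have cover: "{\<omega> \<in> space M. thinned B v \<omega> \<ge> j} \<subseteq> V \<union> (\<Union>i\<in>{1..K}. W i) \<union> Z"
  proof
    fix \<omega> assume "\<omega> \<in> {\<omega> \<in> space M. thinned B v \<omega> \<ge> j}"
    then have \<omega>: "\<omega> \<in> space M" "j \<le> S (v \<omega>) \<omega>" by (auto simp: thinned_S)
    show "\<omega> \<in> V \<union> (\<Union>i\<in>{1..K}. W i) \<union> Z"
    proof (cases "x - h \<le> real (v \<omega>)")
      case True then show ?thesis using \<omega> by (simp add: V_def)
    next
      case F1: False
      show ?thesis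
      proof (cases "real (v \<omega>) \<le> x - (K+1) * h")
        case True
        then have "v \<omega> \<le> mi (K+1)" unfolding mi_def by (simp add: le_nat_floor le_floor_iff)
        then have "S (v \<omega>) \<omega> \<le> S (mi (K+1)) \<omega>" by (rule S_mono)
        then have "\<omega> \<in> Z" using \<omega> by (simp add: Z_def)
        then show ?thesis by simp
      next
        case F2: False
        define y where "y = (x - real (v \<omega>)) / h"
        define i where "i = nat \<lfloor>y\<rfloor>"
        have r1: "y > 1" using F1 h by (simp add: field_simps y_def)
        have r2: "y < K + 1" using F2 h by (simp add: field_simps y_def)
        have "0 \<le> \<lfloor>y\<rfloor>" using r1 by simp
        then have ri: "real i = real_of_int \<lfloor>y\<rfloor>" by (simp add: i_def)
        have fl1: "real i \<le> (x - real (v \<omega>)) / h" using ri floor_correct[of y] by (simp add: y_def)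
        have fl2: "(x - real (v \<omega>)) / h < real i + 1" using ri floor_correct[of y] by (simp add: y_def)
        have "real i < real K + 1" using fl1 r2 by (simp add: y_def)
        then have iK: "i \<le> K" by simp
        have "1 \<le> \<lfloor>y\<rfloor>" using r1 by simp
        then have i1: "i \<ge> 1" by (simp add: i_def le_nat_iff)
        have a1: "real i * h \<le> x - real (v \<omega>)" using fl1 h by (simp add: field_simps)
        have a2: "x - real (v \<omega>) < (real i + 1) * h" using fl2 h by (simp add: field_simps)
        have "v \<omega> \<le> mi i" unfolding mi_def using a1 by (simp add: le_nat_floor le_floor_iff)
        then have "S (v \<omega>) \<omega> \<le> S (mi i) \<omega>" by (rule S_mono)
        then have "\<omega> \<in> W i" using \<omega> a2 by (simp add: W_def algebra_simps)
        then show ?thesis using i1 iK by auto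
      qed
    qed
  qed
  have Vm: "V \<in> events" unfolding V_def by measurable
  have Wm: "W i \<in> events" for i unfolding W_def by measurable
  have Zm: "Z \<in> events" unfolding Z_def by measurable
  have U: "(\<Union>i\<in>{1..K}. W i) \<in> events" using Wm by auto
  have c1: "T j \<le> prob (V \<union> (\<Union>i\<in>{1..K}. W i) \<union> Z)"
    unfolding T_def by (intro finite_measure_mono[OF cover]) (use Vm U Zm in auto)
  have c2: "prob (V \<union> (\<Union>i\<in>{1..K}. W i) \<union> Z) \<le> prob (V \<union> (\<Union>i\<in>{1..K}. W i)) + prob Z"
    using Vm U Zm by (intro measure_Un_le) auto
  have c3: "prob (V \<union> (\<Union>i\<in>{1..K}. W i)) \<le> prob V + prob (\<Union>i\<in>{1..K}. W i)"
    using Vm U by (intro measure_Un_le) auto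
  have c4: "prob (\<Union>i\<in>{1..K}. W i) \<le> (\<Sum>i\<in>{1..K}. prob (W i))"
    by (rule finite_measure_subadditive_finite) (use Wm in auto)
  have c5: "(\<Sum>i\<in>{1..K}. prob (W i)) \<le> (\<Sum>i\<in>{1..K}. q (x - (i+1) * h) * exp (-2 * (p*(i*h))\<^sup>2 / x))"
  proof (rule sum_mono)
    fix i assume i: "i \<in> {1..K}"
    have "real i \<le> real (K+1)" using i by simp
    then have "real i * h \<le> real (K+1) * h" using h by (intro mult_right_mono) auto
    then have ih: "real i * h \<le> x" using K by linarith
    have "prob (W i) = q (x - (i+1) * h) * prob {\<omega> \<in> space M. real j \<le> real (S (mi i) \<omega>)}"
      unfolding W_def q_def by (rule indep_vS)
    also have "\<dots> \<le> q (x - (i+1) * h) * exp (-2 * (p*(i*h))\<^sup>2 / x)"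
      by (rule mult_left_mono) (use hup[OF x _ mi_le[OF ih] j] h in \<open>auto simp: q_def\<close>)
    finally show "prob (W i) \<le> q (x - (i+1) * h) * exp (-2 * (p*(i*h))\<^sup>2 / x)" .
  qed
  have c6: "prob Z \<le> exp (-2 * (p*((K+1)*h))\<^sup>2 / x)"
    unfolding Z_def using hup[OF x _ mi_le[of "K+1"] j] h K by simp
  have c7: "prob V = q (x - h)" by (simp add: V_def q_def)
  show ?thesis using c1 c2 c3 c4 c5 c6 c7 by linarith
qed

end

theorem mainTheorem11:
  fixes M :: "'a measure" and B :: "nat \<Rightarrow> 'a \<Rightarrow> nat" and v :: "'a \<Rightarrow> nat" and p :: real
  assumes "prob_space M"
    and p: "0 < p" "p < 1"
    and indep: "prob_space.indep_vars M (\<lambda>_. count_space UNIV)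
                  (\<lambda>i. case i of None \<Rightarrow> v | Some n \<Rightarrow> B n) (UNIV :: nat option set)"
    and bern_vals: "\<And>n \<omega>. n \<ge> 1 \<Longrightarrow> \<omega> \<in> space M \<Longrightarrow> B n \<omega> \<in> {0, 1}"
    and bern_p: "\<And>n. n \<ge> 1 \<Longrightarrow> measure M {\<omega> \<in> space M. B n \<omega> = 1} = p"
    and tail: "(\<exists>L a. a > 1 \<and> slowly_varying L \<and>
                  (\<forall>x>0. measure M {\<omega> \<in> space M. real (v \<omega>) \<ge> x} = L x * x powr (- a)))
             \<or> (\<exists>L \<beta> \<delta>. 0 < \<beta> \<and> \<beta> < 1/2 \<and> \<delta> > 0 \<and> slowly_varying L \<and>
                  (\<forall>x\<ge>0. measure M {\<omega> \<in> space M. real (v \<omega>) \<ge> x} = L x * exp (- \<delta> * x powr \<beta>)))"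
  shows "((\<lambda>j::nat. \<bar>measure M {\<omega> \<in> space M. thinned B v \<omega> \<ge> j}
                     / measure M {\<omega> \<in> space M. real (v \<omega>) \<ge> real j / p} - 1\<bar>) \<longlonglongrightarrow> 0)"
proof -
  interpret thin M B v p
    by (rule thin.intro[OF assms(1)], unfold_locales) (use assms in auto)
  have q0: "\<And>x. 0 \<le> q x" by (simp add: q_def)
  have qmono: "\<And>x y. x \<le> y \<Longrightarrow> q y \<le> q x"
    unfolding q_def by (intro finite_measure_mono) auto
  have UB: "\<And>j x h (K::nat). 0 < x \<Longrightarrow> 0 < h \<Longrightarrow> real j = p * x \<Longrightarrow> real (K+1) * h \<le> x \<Longrightarrow>
       T j \<le> q (x - h) + (\<Sum>i\<in>{1..K}. q (x - real (i+1) * h) * exp (-2 * (p * (real i * h))\<^sup>2 / x))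
              + exp (-2 * (p * (real (K+1) * h))\<^sup>2 / x)"
    by (rule upper_bound) auto
  have LB: "\<And>j x w. 0 < x \<Longrightarrow> 0 < w \<Longrightarrow> real j = p * x \<Longrightarrow>
       q (x + w) * (1 - exp (-2 * (p * w)\<^sup>2 / (x + w + 1))) \<le> T j"
    by (rule lower_bound) auto
  have goal: "(\<lambda>j. \<bar>T j / q (real j / p) - 1\<bar>) \<longlonglongrightarrow> 0"
    using tail
  proof
    assume "\<exists>L a. a > 1 \<and> slowly_varying L \<and>
                  (\<forall>x>0. measure M {\<omega> \<in> space M. real (v \<omega>) \<ge> x} = L x * x powr (- a))"
    then obtain L a where a: "a > 1" and SV: "slowly_varying L"
      and qL: "\<forall>x>0. measure M {\<omega> \<in> space M. real (v \<omega>) \<ge> x} = L x * x powr (- a)" by blast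
    show ?thesis
      by (rule case1[where L=L, OF p q0 qmono UB LB a])
         (use SV qL in \<open>auto simp: slowly_varying_def q_def\<close>)
  next
    assume "\<exists>L \<beta> \<delta>. 0 < \<beta> \<and> \<beta> < 1/2 \<and> \<delta> > 0 \<and> slowly_varying L \<and>
                  (\<forall>x\<ge>0. measure M {\<omega> \<in> space M. real (v \<omega>) \<ge> x} = L x * exp (- \<delta> * x powr \<beta>))"
    then obtain L \<beta> \<delta> where b: "0 < \<beta>" "\<beta> < 1/2" and d: "\<delta> > 0" and SV: "slowly_varying L"
      and qL: "\<forall>x\<ge>0. measure M {\<omega> \<in> space M. real (v \<omega>) \<ge> x} = L x * exp (- \<delta> * x powr \<beta>)" by blast
    show ?thesis
      by (rule case2[where L=L, OF p q0 qmono UB LB b d])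
         (use SV qL in \<open>auto simp: slowly_varying_def q_def\<close>)
  qed
  then show ?thesis by (simp add: T_def q_def)
qed

end
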